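(* Let $\mathbb{C}$ be an almost exact Gumm category. Suppose given morphisms $\varphi\colon P\to Z$, $x\colon P\to X$, $f\colon X\to Y$, $y\colon Z\to Y$, $u\colon X\to U$, $v\colon Y\to V$, $w\colon U\to V$ with $fx=y\varphi$ and $wu=vf$, such that $\varphi,x,f,y$ are regular epimorphisms, the square $fx=y\varphi$ is a pushout, and the outer rectangle (the square with sides $\varphi$, $ux$, $vy$, $w$) is a pullback. Then both squares $fx=y\varphi$ and $wu=vf$ are pullbacks.
   Context: A regular category is a finitely complete category in which every kernel pair has a coequaliser and regular epimorphisms are stable under pullback. A regular category is almost exact if every regular epimorphism is an effective descent morphism; equivalently, for every regular epimorphism $f\colon X\to Y$ with kernel pair $R_f$ and every equivalence relation $R$ on an object $X'$ equipped with a morphism of relations $(g,h)\colon R\to R_f$ (with $g\colon X'\to X$) which is a discrete fibration (the squares formed by the projections are pullbacks), $R$ is an effective equivalence relation (a kernel pair). For equivalence relations $R,S$ on an object $X$, $R\square S$ denotes the largest double equivalence relation on $R$ and $S$: in generalized elements, the relation on $R$ consisting of pairs $((a,b),(c,d))$ with $(a,b),(c,d)\in R$, $(a,c)\in S$, $(b,d)\in S$, with projections $\pi_1,\pi_2$ to $R$. A finitely complete category is a Gumm category if for all equivalence relations $R,S,T$ on a same object with $R\wedge S\le T\le R$, the canonical inclusion $T\square S\to R\square S$ over $T\to R$ is a discrete fibration, i.e. the squares it forms with the projections $\pi_1$, $\pi_2$ are pullbacks. *)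

theory Defs
  imports Main
begin

text \<open>An abstract (arrows-only) category: arrows of type 'a, objects are the
identity arrows, Cmp C g f is the composite g after f (specified only for
composable pairs).\<close>

record 'a cat =
  Arr :: "'a set"
  Dom :: "'a \<Rightarrow> 'a"
  Cod :: "'a \<Rightarrow> 'a"
  Cmp :: "'a \<Rightarrow> 'a \<Rightarrow> 'a"

definition Ob :: "'a cat \<Rightarrow> 'a set" where
  "Ob C = {a \<in> Arr C. Dom C a = a \<and> Cod C a = a}"

definition hom :: "'a cat \<Rightarrow> 'a \<Rightarrow> 'a \<Rightarrow> 'a set" where
  "hom C a b = {f \<in> Arr C. Dom C f = a \<and> Cod C f = b}"

definition category :: "'a cat \<Rightarrow> bool" where
  "category C \<longleftrightarrow>
     (\<forall>f\<in>Arr C. Dom C f \<in> Ob C \<and> Cod C f \<in> Ob C) \<and>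
     (\<forall>f\<in>Arr C. \<forall>g\<in>Arr C. Cod C f = Dom C g \<longrightarrow>
         Cmp C g f \<in> hom C (Dom C f) (Cod C g)) \<and>
     (\<forall>f\<in>Arr C. Cmp C f (Dom C f) = f \<and> Cmp C (Cod C f) f = f) \<and>
     (\<forall>f\<in>Arr C. \<forall>g\<in>Arr C. \<forall>h\<in>Arr C. Cod C f = Dom C g \<and> Cod C g = Dom C h \<longrightarrow>
         Cmp C h (Cmp C g f) = Cmp C (Cmp C h g) f)"

definition is_pullback :: "'a cat \<Rightarrow> 'a \<Rightarrow> 'a \<Rightarrow> 'a \<Rightarrow> 'a \<Rightarrow> bool" where
  "is_pullback C f g p q \<longleftrightarrow>
     f \<in> Arr C \<and> g \<in> Arr C \<and> p \<in> Arr C \<and> q \<in> Arr C \<and>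
     Cod C f = Cod C g \<and> Cod C p = Dom C f \<and> Cod C q = Dom C g \<and> Dom C p = Dom C q \<and>
     Cmp C f p = Cmp C g q \<and>
     (\<forall>h\<in>Arr C. \<forall>k\<in>Arr C.
        Cod C h = Dom C f \<and> Cod C k = Dom C g \<and> Dom C h = Dom C k \<and> Cmp C f h = Cmp C g k
        \<longrightarrow> (\<exists>!t. t \<in> hom C (Dom C h) (Dom C p) \<and> Cmp C p t = h \<and> Cmp C q t = k))"

definition is_pushout :: "'a cat \<Rightarrow> 'a \<Rightarrow> 'a \<Rightarrow> 'a \<Rightarrow> 'a \<Rightarrow> bool" where
  "is_pushout C p q f g \<longleftrightarrow>
     f \<in> Arr C \<and> g \<in> Arr C \<and> p \<in> Arr C \<and> q \<in> Arr C \<and>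
     Cod C f = Cod C g \<and> Cod C p = Dom C f \<and> Cod C q = Dom C g \<and> Dom C p = Dom C q \<and>
     Cmp C f p = Cmp C g q \<and>
     (\<forall>h\<in>Arr C. \<forall>k\<in>Arr C.
        Dom C h = Cod C p \<and> Dom C k = Cod C q \<and> Cod C h = Cod C k \<and> Cmp C h p = Cmp C k q
        \<longrightarrow> (\<exists>!t. t \<in> hom C (Cod C f) (Cod C h) \<and> Cmp C t f = h \<and> Cmp C t g = k))"

definition coequalizer :: "'a cat \<Rightarrow> 'a \<Rightarrow> 'a \<Rightarrow> 'a \<Rightarrow> bool" where
  "coequalizer C a b e \<longleftrightarrow>
     a \<in> Arr C \<and> b \<in> Arr C \<and> e \<in> Arr C \<and>
     Dom C a = Dom C b \<and> Cod C a = Cod C b \<and> Dom C e = Cod C a \<and>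
     Cmp C e a = Cmp C e b \<and>
     (\<forall>h\<in>Arr C. Dom C h = Cod C a \<and> Cmp C h a = Cmp C h b
        \<longrightarrow> (\<exists>!t. t \<in> hom C (Cod C e) (Cod C h) \<and> Cmp C t e = h))"

definition regular_epi :: "'a cat \<Rightarrow> 'a \<Rightarrow> bool" where
  "regular_epi C e \<longleftrightarrow> e \<in> Arr C \<and> (\<exists>a b. coequalizer C a b e)"

definition kernel_pair :: "'a cat \<Rightarrow> 'a \<Rightarrow> 'a \<Rightarrow> 'a \<Rightarrow> bool" where
  "kernel_pair C k1 k2 f \<longleftrightarrow> is_pullback C f f k1 k2"

definition finitely_complete :: "'a cat \<Rightarrow> bool" where
  "finitely_complete C \<longleftrightarrow>
     category C \<and>
     (\<exists>T\<in>Ob C. \<forall>X\<in>Ob C. \<exists>!h. h \<in> hom C X T) \<and>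
     (\<forall>f\<in>Arr C. \<forall>g\<in>Arr C. Cod C f = Cod C g \<longrightarrow> (\<exists>p q. is_pullback C f g p q))"

definition regular :: "'a cat \<Rightarrow> bool" where
  "regular C \<longleftrightarrow>
     finitely_complete C \<and>
     (\<forall>f k1 k2. kernel_pair C k1 k2 f \<longrightarrow> (\<exists>e. coequalizer C k1 k2 e)) \<and>
     (\<forall>f g p q. is_pullback C f g p q \<and> regular_epi C f \<longrightarrow> regular_epi C q)"

text \<open>Relations as spans (r1, r2): R \<rightarrow> X; membership of a pair of generalized
elements x, y: T \<rightarrow> X.\<close>
definition rel_mem :: "'a cat \<Rightarrow> 'a \<Rightarrow> 'a \<Rightarrow> 'a \<Rightarrow> 'a \<Rightarrow> bool" where
  "rel_mem C r1 r2 x y \<longleftrightarrow>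
     (\<exists>c\<in>Arr C. Cod C c = Dom C r1 \<and> Cmp C r1 c = x \<and> Cmp C r2 c = y)"

definition gen_pair :: "'a cat \<Rightarrow> 'a \<Rightarrow> 'a \<Rightarrow> 'a \<Rightarrow> bool" where
  "gen_pair C X x y \<longleftrightarrow> x \<in> Arr C \<and> y \<in> Arr C \<and> Cod C x = X \<and> Cod C y = X \<and> Dom C x = Dom C y"

definition equiv_rel :: "'a cat \<Rightarrow> 'a \<Rightarrow> 'a \<Rightarrow> bool" where
  "equiv_rel C r1 r2 \<longleftrightarrow>
     r1 \<in> Arr C \<and> r2 \<in> Arr C \<and> Dom C r1 = Dom C r2 \<and> Cod C r1 = Cod C r2 \<and>
     (\<forall>a b. gen_pair C (Dom C r1) a b \<and> Cmp C r1 a = Cmp C r1 b \<and> Cmp C r2 a = Cmp C r2 b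
        \<longrightarrow> a = b) \<and>
     (\<forall>x\<in>Arr C. Cod C x = Cod C r1 \<longrightarrow> rel_mem C r1 r2 x x) \<and>
     (\<forall>x y. gen_pair C (Cod C r1) x y \<and> rel_mem C r1 r2 x y \<longrightarrow> rel_mem C r1 r2 y x) \<and>
     (\<forall>x y z. gen_pair C (Cod C r1) x y \<and> gen_pair C (Cod C r1) y z \<and>
        rel_mem C r1 r2 x y \<and> rel_mem C r1 r2 y z \<longrightarrow> rel_mem C r1 r2 x z)"

definition effective :: "'a cat \<Rightarrow> 'a \<Rightarrow> 'a \<Rightarrow> bool" where
  "effective C r1 r2 \<longleftrightarrow> (\<exists>f. kernel_pair C r1 r2 f)"

text \<open>The morphism of relations (g, h): (r1, r2) \<rightarrow> (s1, s2) (g on the base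
objects, h on the relation objects) is a discrete fibration.\<close>
definition discrete_fibration :: "'a cat \<Rightarrow> 'a \<Rightarrow> 'a \<Rightarrow> 'a \<Rightarrow> 'a \<Rightarrow> 'a \<Rightarrow> 'a \<Rightarrow> bool" where
  "discrete_fibration C r1 r2 s1 s2 g h \<longleftrightarrow>
     g \<in> hom C (Cod C r1) (Cod C s1) \<and> h \<in> hom C (Dom C r1) (Dom C s1) \<and>
     Cmp C s1 h = Cmp C g r1 \<and> Cmp C s2 h = Cmp C g r2 \<and>
     is_pullback C s1 g h r1 \<and> is_pullback C s2 g h r2"

definition almost_exact :: "'a cat \<Rightarrow> bool" where
  "almost_exact C \<longleftrightarrow>
     regular C \<and>
     (\<forall>f k1 k2 r1 r2 g h.
        regular_epi C f \<and> kernel_pair C k1 k2 f \<and> equiv_rel C r1 r2 \<and>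
        discrete_fibration C r1 r2 k1 k2 g h \<longrightarrow> effective C r1 r2)"

text \<open>(p1, p2): D \<rightarrow> R exhibit D as R\<box>S for relations R = (r1, r2), S = (s1, s2)
on the same object: generalized elements of D are exactly pairs ((a,b),(c,d))
of elements of R with (a,c) \<in> S and (b,d) \<in> S.\<close>
definition is_dbl :: "'a cat \<Rightarrow> 'a \<Rightarrow> 'a \<Rightarrow> 'a \<Rightarrow> 'a \<Rightarrow> 'a \<Rightarrow> 'a \<Rightarrow> bool" where
  "is_dbl C r1 r2 s1 s2 p1 p2 \<longleftrightarrow>
     p1 \<in> hom C (Dom C p1) (Dom C r1) \<and> p2 \<in> hom C (Dom C p1) (Dom C r1) \<and>
     (\<forall>t\<in>Arr C. Cod C t = Dom C p1 \<longrightarrow>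
        rel_mem C s1 s2 (Cmp C r1 (Cmp C p1 t)) (Cmp C r1 (Cmp C p2 t)) \<and>
        rel_mem C s1 s2 (Cmp C r2 (Cmp C p1 t)) (Cmp C r2 (Cmp C p2 t))) \<and>
     (\<forall>a b. gen_pair C (Dom C r1) a b \<and>
        rel_mem C s1 s2 (Cmp C r1 a) (Cmp C r1 b) \<and> rel_mem C s1 s2 (Cmp C r2 a) (Cmp C r2 b)
        \<longrightarrow> (\<exists>!t. t \<in> hom C (Dom C a) (Dom C p1) \<and> Cmp C p1 t = a \<and> Cmp C p2 t = b))"

definition gumm :: "'a cat \<Rightarrow> bool" where
  "gumm C \<longleftrightarrow>
     finitely_complete C \<and>
     (\<forall>r1 r2 s1 s2 t1 t2 \<iota> pR1 pR2 pT1 pT2 j.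
        equiv_rel C r1 r2 \<and> equiv_rel C s1 s2 \<and> equiv_rel C t1 t2 \<and>
        Cod C s1 = Cod C r1 \<and> Cod C t1 = Cod C r1 \<and>
        (\<forall>x y. gen_pair C (Cod C r1) x y \<and> rel_mem C r1 r2 x y \<and> rel_mem C s1 s2 x y
           \<longrightarrow> rel_mem C t1 t2 x y) \<and>
        (\<forall>x y. gen_pair C (Cod C r1) x y \<and> rel_mem C t1 t2 x y \<longrightarrow> rel_mem C r1 r2 x y) \<and>
        \<iota> \<in> hom C (Dom C t1) (Dom C r1) \<and> Cmp C r1 \<iota> = t1 \<and> Cmp C r2 \<iota> = t2 \<and>
        is_dbl C r1 r2 s1 s2 pR1 pR2 \<and> is_dbl C t1 t2 s1 s2 pT1 pT2 \<and>
        j \<in> hom C (Dom C pT1) (Dom C pR1) \<and>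
        Cmp C pR1 j = Cmp C \<iota> pT1 \<and> Cmp C pR2 j = Cmp C \<iota> pT2
        \<longrightarrow> is_pullback C pR1 \<iota> j pT1 \<and> is_pullback C pR2 \<iota> j pT2)"

end

theory Submission
  imports Defs
begin

locale CC =
  fixes C :: "'a cat"
  assumes cat: "category C"
begin

abbreviation cp (infixr "\<cdot>" 55) where "g \<cdot> f \<equiv> Cmp C g f"
abbreviation arr where "arr f \<equiv> f \<in> Arr C"

lemma arr_comp[simp]: "arr f \<Longrightarrow> arr g \<Longrightarrow> Cod C f = Dom C g \<Longrightarrow> arr (g \<cdot> f)"
  using cat unfolding category_def hom_def by blast
lemma dom_comp[simp]: "arr f \<Longrightarrow> arr g \<Longrightarrow> Cod C f = Dom C g \<Longrightarrow> Dom C (g \<cdot> f) = Dom C f"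
  using cat unfolding category_def hom_def by blast
lemma cod_comp[simp]: "arr f \<Longrightarrow> arr g \<Longrightarrow> Cod C f = Dom C g \<Longrightarrow> Cod C (g \<cdot> f) = Cod C g"
  using cat unfolding category_def hom_def by blast
lemma assoc[simp]: "arr f \<Longrightarrow> arr g \<Longrightarrow> arr h \<Longrightarrow> Cod C f = Dom C g \<Longrightarrow> Cod C g = Dom C h \<Longrightarrow> (h \<cdot> g) \<cdot> f = h \<cdot> (g \<cdot> f)"
  using cat unfolding category_def by metis
lemma id_right[simp]: "arr f \<Longrightarrow> f \<cdot> Dom C f = f"
  using cat unfolding category_def by blast
lemma id_left[simp]: "arr f \<Longrightarrow> Cod C f \<cdot> f = f"
  using cat unfolding category_def by blast
lemma arr_dom[simp]: "arr f \<Longrightarrow> arr (Dom C f)"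
  using cat unfolding category_def Ob_def by blast
lemma arr_cod[simp]: "arr f \<Longrightarrow> arr (Cod C f)"
  using cat unfolding category_def Ob_def by blast
lemma dom_dom[simp]: "arr f \<Longrightarrow> Dom C (Dom C f) = Dom C f"
  using cat unfolding category_def Ob_def by blast
lemma cod_dom[simp]: "arr f \<Longrightarrow> Cod C (Dom C f) = Dom C f"
  using cat unfolding category_def Ob_def by blast
lemma dom_cod[simp]: "arr f \<Longrightarrow> Dom C (Cod C f) = Cod C f"
  using cat unfolding category_def Ob_def by blast
lemma cod_cod[simp]: "arr f \<Longrightarrow> Cod C (Cod C f) = Cod C f"
  using cat unfolding category_def Ob_def by blast

lemma ext_eq: assumes "a \<cdot> b = c \<cdot> d" "arr a" "arr b" "arr c" "arr d" "arr t"
  "Cod C b = Dom C a" "Cod C d = Dom C c" "Cod C t = Dom C b" "Dom C b = Dom C d"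
  shows "a \<cdot> (b \<cdot> t) = c \<cdot> (d \<cdot> t)"
proof -
  have "a \<cdot> (b \<cdot> t) = (a \<cdot> b) \<cdot> t" by (rule assoc[symmetric]) (use assms in auto)
  also have "\<dots> = (c \<cdot> d) \<cdot> t" using assms(1) by simp
  also have "\<dots> = c \<cdot> (d \<cdot> t)" by (rule assoc) (use assms in auto)
  finally show ?thesis .
qed

lemma pb_D: assumes "is_pullback C f g p q"
  shows "arr f" "arr g" "arr p" "arr q" "Cod C f = Cod C g" "Cod C p = Dom C f"
    "Cod C q = Dom C g" "Dom C p = Dom C q" "f \<cdot> p = g \<cdot> q"
  using assms unfolding is_pullback_def by auto

lemma pb_ex: assumes "is_pullback C f g p q" "arr h" "arr k" "Cod C h = Dom C f"
    "Cod C k = Dom C g" "Dom C h = Dom C k" "f \<cdot> h = g \<cdot> k"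
  obtains t where "arr t" "Dom C t = Dom C h" "Cod C t = Dom C p" "p \<cdot> t = h" "q \<cdot> t = k"
  using assms unfolding is_pullback_def hom_def by blast

lemma ex1_eq: "\<exists>!x. P x \<Longrightarrow> P a \<Longrightarrow> P b \<Longrightarrow> a = b" by blast

lemma pb_univ: assumes "is_pullback C f g p q" "arr h" "arr k" "Cod C h = Dom C f"
    "Cod C k = Dom C g" "Dom C h = Dom C k" "f \<cdot> h = g \<cdot> k"
  shows "\<exists>!t. t \<in> hom C (Dom C h) (Dom C p) \<and> p \<cdot> t = h \<and> q \<cdot> t = k"
  using assms unfolding is_pullback_def by blast

lemma pb_uniq: assumes "is_pullback C f g p q" "arr t" "arr t'" "Cod C t = Dom C p"
   "Cod C t' = Dom C p" "Dom C t = Dom C t'" "p \<cdot> t = p \<cdot> t'" "q \<cdot> t = q \<cdot> t'"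
  shows "t = t'"
proof -
  note D = pb_D[OF assms(1)]
  have e: "f \<cdot> (p \<cdot> t) = g \<cdot> (q \<cdot> t)" by (rule ext_eq) (use D assms in auto)
  have u: "\<exists>!s. s \<in> hom C (Dom C (p \<cdot> t)) (Dom C p) \<and> p \<cdot> s = p \<cdot> t \<and> q \<cdot> s = q \<cdot> t"
    by (rule pb_univ[OF assms(1)]) (use D assms e in auto)
  show ?thesis
    by (rule ex1_eq[OF u]) (use D assms in \<open>auto simp: hom_def\<close>)
qed

lemma pb_comm: assumes "is_pullback C f g p q" "arr t" "Cod C t = Dom C p"
  shows "f \<cdot> (p \<cdot> t) = g \<cdot> (q \<cdot> t)"
proof -
  note D = pb_D[OF assms(1)]
  show ?thesis by (rule ext_eq) (use D assms in auto)
qed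

lemma coeq_D: assumes "coequalizer C a b e"
  shows "arr a" "arr b" "arr e" "Dom C a = Dom C b" "Cod C a = Cod C b" "Dom C e = Cod C a" "e \<cdot> a = e \<cdot> b"
  using assms unfolding coequalizer_def by auto

lemma coeq_ex: assumes "coequalizer C a b e" "arr h" "Dom C h = Cod C a" "h \<cdot> a = h \<cdot> b"
  obtains t where "arr t" "Dom C t = Cod C e" "Cod C t = Cod C h" "t \<cdot> e = h"
  using assms unfolding coequalizer_def hom_def by blast

lemma coeq_univ: assumes "coequalizer C a b e" "arr h" "Dom C h = Cod C a" "h \<cdot> a = h \<cdot> b"
  shows "\<exists>!t. t \<in> hom C (Cod C e) (Cod C h) \<and> t \<cdot> e = h"
  using assms unfolding coequalizer_def by blast

lemma epi: assumes "regular_epi C e" "arr s" "arr s'" "Dom C s = Cod C e" "Dom C s' = Cod C e"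
    "Cod C s = Cod C s'" "s \<cdot> e = s' \<cdot> e"
  shows "s = s'"
proof -
  obtain a b where c: "coequalizer C a b e" using assms(1) unfolding regular_epi_def by blast
  note D = coeq_D[OF c]
  have "(s \<cdot> e) \<cdot> a = (s \<cdot> e) \<cdot> b"
  proof -
    have "(s \<cdot> e) \<cdot> a = s \<cdot> (e \<cdot> a)" by (rule assoc) (use D assms in auto)
    also have "\<dots> = s \<cdot> (e \<cdot> b)" using D(7) by simp
    also have "\<dots> = (s \<cdot> e) \<cdot> b" by (rule assoc[symmetric]) (use D assms in auto)
    finally show ?thesis .
  qed
  hence u: "\<exists>!t. t \<in> hom C (Cod C e) (Cod C (s \<cdot> e)) \<and> t \<cdot> e = s \<cdot> e"
    by (intro coeq_univ[OF c]) (use D assms in auto)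
  show ?thesis
    by (rule ex1_eq[OF u]) (use D assms in \<open>auto simp: hom_def\<close>)
qed

lemma regular_epi_arr: "regular_epi C e \<Longrightarrow> arr e"
  unfolding regular_epi_def by auto

lemma descend: assumes "regular_epi C e" "arr h" "Dom C h = Dom C e"
  "\<And>a b. arr a \<Longrightarrow> arr b \<Longrightarrow> Cod C a = Dom C e \<Longrightarrow> Cod C b = Dom C e \<Longrightarrow> Dom C a = Dom C b
     \<Longrightarrow> e \<cdot> a = e \<cdot> b \<Longrightarrow> h \<cdot> a = h \<cdot> b"
  obtains t where "arr t" "Dom C t = Cod C e" "Cod C t = Cod C h" "t \<cdot> e = h"
proof -
  obtain a b where c: "coequalizer C a b e" using assms(1) unfolding regular_epi_def by blast
  note D = coeq_D[OF c]
  have "h \<cdot> a = h \<cdot> b" by (rule assms(4)) (use D in simp_all)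
  then obtain t where "arr t" "Dom C t = Cod C e" "Cod C t = Cod C h" "t \<cdot> e = h"
    using coeq_ex[OF c assms(2)] D(6) assms(3) by metis
  thus ?thesis by (rule that)
qed

lemma po_ex: assumes "is_pushout C p q f g" "arr h" "arr k" "Dom C h = Cod C p" "Dom C k = Cod C q"
    "Cod C h = Cod C k" "h \<cdot> p = k \<cdot> q"
  obtains t where "arr t" "Dom C t = Cod C f" "Cod C t = Cod C h" "t \<cdot> f = h" "t \<cdot> g = k"
proof -
  have "\<forall>h\<in>Arr C. \<forall>k\<in>Arr C.
        Dom C h = Cod C p \<and> Dom C k = Cod C q \<and> Cod C h = Cod C k \<and> Cmp C h p = Cmp C k q
        \<longrightarrow> (\<exists>!t. t \<in> hom C (Cod C f) (Cod C h) \<and> Cmp C t f = h \<and> Cmp C t g = k)"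
    using assms(1) unfolding is_pushout_def by (elim conjE)
  hence "\<exists>!t. t \<in> hom C (Cod C f) (Cod C h) \<and> t \<cdot> f = h \<and> t \<cdot> g = k" using assms by simp
  then obtain t where "t \<in> hom C (Cod C f) (Cod C h)" "t \<cdot> f = h" "t \<cdot> g = k" by blast
  thus ?thesis using that unfolding hom_def by blast
qed

end

locale RC = CC +
  assumes reg: "regular C"
begin

lemma fc: "finitely_complete C" using reg unfolding regular_def by (elim conjE)

lemma pb_exists: assumes "arr f" "arr g" "Cod C f = Cod C g"
  obtains p q where "is_pullback C f g p q"
proof -
  have "\<forall>f\<in>Arr C. \<forall>g\<in>Arr C. Cod C f = Cod C g \<longrightarrow> (\<exists>p q. is_pullback C f g p q)"
    using fc unfolding finitely_complete_def by (elim conjE)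
  hence "\<exists>p q. is_pullback C f g p q" using assms by simp
  thus ?thesis using that by blast
qed

lemma pb_stable: assumes "is_pullback C f g p q" "regular_epi C f" shows "regular_epi C q"
proof -
  have "\<forall>f g p q. is_pullback C f g p q \<and> regular_epi C f \<longrightarrow> regular_epi C q"
    using reg unfolding regular_def by (elim conjE)
  thus ?thesis using assms by metis
qed

lemma kp_coeq: assumes "is_pullback C f f k1 k2" shows "\<exists>e. coequalizer C k1 k2 e"
proof -
  have "\<forall>f k1 k2. kernel_pair C k1 k2 f \<longrightarrow> (\<exists>e. coequalizer C k1 k2 e)"
    using reg unfolding regular_def by (elim conjE)
  thus ?thesis using assms unfolding kernel_pair_def by metis
qed

lemma cover: assumes "regular_epi C x" "arr a" "Cod C a = Cod C x"
  obtains e q where "regular_epi C e" "arr e" "arr q" "Cod C e = Dom C a" "Dom C q = Dom C e"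
     "Cod C q = Dom C x" "x \<cdot> q = a \<cdot> e"
proof -
  have ax: "arr x" using assms(1) regular_epi_arr by auto
  obtain q e where pb: "is_pullback C x a q e" using pb_exists[OF ax assms(2)] assms(3) by metis
  have r: "regular_epi C e" using pb_stable[OF pb assms(1)] .
  note D = pb_D[OF pb]
  show ?thesis by (rule that[OF r]) (use D in simp_all)
qed

end

context CC
begin

lemma kp_rel: assumes "is_pullback C f f k1 k2" "rel_mem C k1 k2 a b" shows "f \<cdot> a = f \<cdot> b"
proof -
  obtain c where c: "arr c" "Cod C c = Dom C k1" "k1 \<cdot> c = a" "k2 \<cdot> c = b"
    using assms(2) unfolding rel_mem_def by blast
  have "f \<cdot> (k1 \<cdot> c) = f \<cdot> (k2 \<cdot> c)" by (rule pb_comm[OF assms(1)]) (use c in auto)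
  thus ?thesis using c by simp
qed

lemma kp_rel_intro: assumes "is_pullback C f f k1 k2" "arr a" "arr b" "Cod C a = Dom C f"
   "Cod C b = Dom C f" "Dom C a = Dom C b" "f \<cdot> a = f \<cdot> b"
  shows "rel_mem C k1 k2 a b"
proof -
  obtain t where "arr t" "Dom C t = Dom C a" "Cod C t = Dom C k1" "k1 \<cdot> t = a" "k2 \<cdot> t = b"
    using pb_ex[OF assms(1,2,3,4,5,6,7)] by metis
  thus ?thesis unfolding rel_mem_def by blast
qed

lemma kp_equiv: assumes pb: "is_pullback C f f k1 k2" shows "equiv_rel C k1 k2"
proof -
  note D = pb_D[OF pb]
  have jm: "\<forall>a b. gen_pair C (Dom C k1) a b \<and> k1 \<cdot> a = k1 \<cdot> b \<and> k2 \<cdot> a = k2 \<cdot> b \<longrightarrow> a = b"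
  proof (intro allI impI)
    fix a b assume h: "gen_pair C (Dom C k1) a b \<and> k1 \<cdot> a = k1 \<cdot> b \<and> k2 \<cdot> a = k2 \<cdot> b"
    show "a = b" by (rule pb_uniq[OF pb]) (use h in \<open>auto simp: gen_pair_def\<close>)
  qed
  have rf: "\<forall>a\<in>Arr C. Cod C a = Cod C k1 \<longrightarrow> rel_mem C k1 k2 a a"
  proof (intro ballI impI)
    fix a assume "arr a" "Cod C a = Cod C k1"
    thus "rel_mem C k1 k2 a a" by (intro kp_rel_intro[OF pb]) (use D in auto)
  qed
  have sy: "\<forall>a b. gen_pair C (Cod C k1) a b \<and> rel_mem C k1 k2 a b \<longrightarrow> rel_mem C k1 k2 b a"
  proof (intro allI impI)
    fix a b assume h: "gen_pair C (Cod C k1) a b \<and> rel_mem C k1 k2 a b"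
    hence "f \<cdot> a = f \<cdot> b" using kp_rel[OF pb] by blast
    thus "rel_mem C k1 k2 b a" by (intro kp_rel_intro[OF pb]) (use D h in \<open>auto simp: gen_pair_def\<close>)
  qed
  have tr: "\<forall>a b c. gen_pair C (Cod C k1) a b \<and> gen_pair C (Cod C k1) b c \<and>
        rel_mem C k1 k2 a b \<and> rel_mem C k1 k2 b c \<longrightarrow> rel_mem C k1 k2 a c"
  proof (intro allI impI)
    fix a b c assume h: "gen_pair C (Cod C k1) a b \<and> gen_pair C (Cod C k1) b c \<and>
        rel_mem C k1 k2 a b \<and> rel_mem C k1 k2 b c"
    hence "f \<cdot> a = f \<cdot> b" "f \<cdot> b = f \<cdot> c" using kp_rel[OF pb] by blast+
    thus "rel_mem C k1 k2 a c" by (intro kp_rel_intro[OF pb]) (use D h in \<open>auto simp: gen_pair_def\<close>)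
  qed
  show ?thesis unfolding equiv_rel_def
    by (intro conjI D(3) D(4) jm rf sy tr) (use D in simp_all)
qed

lemma jm_pb: assumes "is_pullback C a b j1 j2" "arr s" "arr t" "Cod C s = Dom C j1" "Cod C t = Dom C j1"
   "Dom C s = Dom C t" "j1 \<cdot> s = j1 \<cdot> t" "j2 \<cdot> s = j2 \<cdot> t" shows "s = t"
  by (rule pb_uniq[OF assms(1)]) (use assms in auto)

lemma dbl_kp:
  assumes S: "is_pullback C \<phi> \<phi> s1 s2"
    and R: "arr r1" "arr r2" "Dom C r1 = Dom C r2" "Cod C r1 = Dom C \<phi>" "Cod C r2 = Dom C \<phi>"
    and M: "is_pullback C a b j1 j2" "Cod C j1 = Cod C \<phi>" "Cod C j2 = Cod C \<phi>"
    and m: "arr m" "Dom C m = Dom C r1" "Cod C m = Dom C j1" "j1 \<cdot> m = \<phi> \<cdot> r1" "j2 \<cdot> m = \<phi> \<cdot> r2"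
    and PP: "is_pullback C m m p1 p2"
  shows "is_dbl C r1 r2 s1 s2 p1 p2"
proof -
  note DS = pb_D[OF S] and DM = pb_D[OF M(1)] and DP = pb_D[OF PP]
  have e1: "\<phi> \<cdot> (r1 \<cdot> z) = j1 \<cdot> (m \<cdot> z)" if "arr z" "Cod C z = Dom C r1" for z
    by (rule ext_eq) (use that R M m DS DM in simp_all)
  have e2: "\<phi> \<cdot> (r2 \<cdot> z) = j2 \<cdot> (m \<cdot> z)" if "arr z" "Cod C z = Dom C r1" for z
    by (rule ext_eq) (use that R M m DS DM in simp_all)
  have A: "p1 \<in> hom C (Dom C p1) (Dom C r1) \<and> p2 \<in> hom C (Dom C p1) (Dom C r1)"
    using DP m unfolding hom_def by simp
  have B: "\<forall>t\<in>Arr C. Cod C t = Dom C p1 \<longrightarrow>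
        rel_mem C s1 s2 (r1 \<cdot> (p1 \<cdot> t)) (r1 \<cdot> (p2 \<cdot> t)) \<and>
        rel_mem C s1 s2 (r2 \<cdot> (p1 \<cdot> t)) (r2 \<cdot> (p2 \<cdot> t))"
  proof (intro ballI impI conjI)
    fix t assume t: "arr t" "Cod C t = Dom C p1"
    have mm: "m \<cdot> (p1 \<cdot> t) = m \<cdot> (p2 \<cdot> t)" by (rule pb_comm[OF PP]) (use t in simp_all)
    have a1: "arr (p1 \<cdot> t)" "Cod C (p1 \<cdot> t) = Dom C r1" "arr (p2 \<cdot> t)" "Cod C (p2 \<cdot> t) = Dom C r1"
      "Dom C (p1 \<cdot> t) = Dom C t" "Dom C (p2 \<cdot> t) = Dom C t"
      using t DP m by simp_all
    have q1: "\<phi> \<cdot> (r1 \<cdot> (p1 \<cdot> t)) = \<phi> \<cdot> (r1 \<cdot> (p2 \<cdot> t))"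
      unfolding e1[OF a1(1,2)] e1[OF a1(3,4)] mm ..
    have q2: "\<phi> \<cdot> (r2 \<cdot> (p1 \<cdot> t)) = \<phi> \<cdot> (r2 \<cdot> (p2 \<cdot> t))"
      unfolding e2[OF a1(1,2)] e2[OF a1(3,4)] mm ..
    show "rel_mem C s1 s2 (r1 \<cdot> (p1 \<cdot> t)) (r1 \<cdot> (p2 \<cdot> t))"
      by (rule kp_rel_intro[OF S _ _ _ _ _ q1]) (use a1 R in simp_all)
    show "rel_mem C s1 s2 (r2 \<cdot> (p1 \<cdot> t)) (r2 \<cdot> (p2 \<cdot> t))"
      by (rule kp_rel_intro[OF S _ _ _ _ _ q2]) (use a1 R in simp_all)
  qed
  have Cc: "\<forall>x y. gen_pair C (Dom C r1) x y \<and>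
        rel_mem C s1 s2 (r1 \<cdot> x) (r1 \<cdot> y) \<and> rel_mem C s1 s2 (r2 \<cdot> x) (r2 \<cdot> y)
        \<longrightarrow> (\<exists>!t. t \<in> hom C (Dom C x) (Dom C p1) \<and> p1 \<cdot> t = x \<and> p2 \<cdot> t = y)"
  proof (intro allI impI)
    fix x y assume h: "gen_pair C (Dom C r1) x y \<and>
        rel_mem C s1 s2 (r1 \<cdot> x) (r1 \<cdot> y) \<and> rel_mem C s1 s2 (r2 \<cdot> x) (r2 \<cdot> y)"
    hence g: "arr x" "arr y" "Cod C x = Dom C r1" "Cod C y = Dom C r1" "Dom C x = Dom C y"
      unfolding gen_pair_def by simp_all
    have "\<phi> \<cdot> (r1 \<cdot> x) = \<phi> \<cdot> (r1 \<cdot> y)" "\<phi> \<cdot> (r2 \<cdot> x) = \<phi> \<cdot> (r2 \<cdot> y)"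
      using h kp_rel[OF S] by blast+
    hence jj: "j1 \<cdot> (m \<cdot> x) = j1 \<cdot> (m \<cdot> y)" "j2 \<cdot> (m \<cdot> x) = j2 \<cdot> (m \<cdot> y)"
      unfolding e1[OF g(1,3)] e1[OF g(2,4)] e2[OF g(1,3)] e2[OF g(2,4)] .
    have mxy: "m \<cdot> x = m \<cdot> y" by (rule jm_pb[OF M(1)]) (use g m jj in simp_all)
    show "\<exists>!t. t \<in> hom C (Dom C x) (Dom C p1) \<and> p1 \<cdot> t = x \<and> p2 \<cdot> t = y"
      by (rule pb_univ[OF PP]) (use g m mxy in simp_all)
  qed
  show ?thesis unfolding is_dbl_def
    by (rule conjI[OF conjunct1[OF A] conjI[OF conjunct2[OF A] conjI[OF B Cc]]])
qed

end

context CC begin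
lemma assoc_eq: assumes "a \<cdot> b = c" "arr a" "arr b" "arr t" "Cod C b = Dom C a" "Cod C t = Dom C b"
  shows "a \<cdot> (b \<cdot> t) = c \<cdot> t"
proof -
  have "a \<cdot> (b \<cdot> t) = (a \<cdot> b) \<cdot> t" by (rule assoc[symmetric]) (use assms in simp_all)
  thus ?thesis using assms(1) by simp
qed
end

locale PS = RC +
  fixes \<phi> x f y u v w P Z X Y U V
  assumes ae: "almost_exact C" and gm: "gumm C"
    and h\<phi>: "\<phi> \<in> hom C P Z" and hx: "x \<in> hom C P X" and hf: "f \<in> hom C X Y" and hy: "y \<in> hom C Z Y"
    and hu: "u \<in> hom C X U" and hv: "v \<in> hom C Y V" and hw: "w \<in> hom C U V"
    and sq1: "f \<cdot> x = y \<cdot> \<phi>" and sq2: "w \<cdot> u = v \<cdot> f"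
    and re\<phi>: "regular_epi C \<phi>" and rex: "regular_epi C x" and ref: "regular_epi C f" and rey: "regular_epi C y"
    and po: "is_pushout C x \<phi> f y"
    and opb: "is_pullback C w (v \<cdot> y) (u \<cdot> x) \<phi>"
begin

lemma ar[simp]: "arr \<phi>" "arr x" "arr f" "arr y" "arr u" "arr v" "arr w"
  using h\<phi> hx hf hy hu hv hw unfolding hom_def by auto
lemma dc[simp]: "Dom C \<phi> = P" "Cod C \<phi> = Z" "Dom C x = P" "Cod C x = X" "Dom C f = X" "Cod C f = Y"
  "Dom C y = Z" "Cod C y = Y" "Dom C u = X" "Cod C u = U" "Dom C v = Y" "Cod C v = V"
  "Dom C w = U" "Cod C w = V"
  using h\<phi> hx hf hy hu hv hw unfolding hom_def by auto

lemma c1[simp]: "arr t \<Longrightarrow> Cod C t = P \<Longrightarrow> f \<cdot> (x \<cdot> t) = y \<cdot> (\<phi> \<cdot> t)"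
  by (rule ext_eq[OF sq1]) auto
lemma c2[simp]: "arr t \<Longrightarrow> Cod C t = X \<Longrightarrow> w \<cdot> (u \<cdot> t) = v \<cdot> (f \<cdot> t)"
  by (rule ext_eq[OF sq2]) auto

lemma opair: assumes "arr a" "arr b" "Cod C a = U" "Cod C b = Z" "Dom C a = Dom C b"
    "w \<cdot> a = v \<cdot> (y \<cdot> b)"
  obtains t where "arr t" "Dom C t = Dom C a" "Cod C t = P" "u \<cdot> (x \<cdot> t) = a" "\<phi> \<cdot> t = b"
proof -
  have e: "w \<cdot> a = (v \<cdot> y) \<cdot> b" using assms by simp
  obtain t where t: "arr t" "Dom C t = Dom C a" "Cod C t = Dom C (u \<cdot> x)" "(u \<cdot> x) \<cdot> t = a" "\<phi> \<cdot> t = b"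
    using pb_ex[OF opb assms(1,2) _ _ assms(5) e] assms by auto
  show ?thesis by (rule that[OF t(1,2)]) (use t in simp_all)
qed

lemma ouniq: assumes "arr t" "arr t'" "Cod C t = P" "Cod C t' = P" "Dom C t = Dom C t'"
    "u \<cdot> (x \<cdot> t) = u \<cdot> (x \<cdot> t')" "\<phi> \<cdot> t = \<phi> \<cdot> t'"
  shows "t = t'"
  by (rule pb_uniq[OF opb]) (use assms in simp_all)

lemma shift: assumes q: "arr q1" "arr q2" "arr s" "arr s'" "Cod C q1 = P" "Cod C q2 = P" "Cod C s = P"
    "Cod C s' = P" "Dom C q2 = Dom C q1" "Dom C s = Dom C q1" "Dom C s' = Dom C q1"
    and h: "x \<cdot> q1 = x \<cdot> q2" "\<phi> \<cdot> s = \<phi> \<cdot> q1" "\<phi> \<cdot> s' = \<phi> \<cdot> q2" "u \<cdot> (x \<cdot> s) = u \<cdot> (x \<cdot> s')"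
  shows "x \<cdot> s = x \<cdot> s'"
proof -
  have ux: "arr (u \<cdot> x)" "Dom C (u \<cdot> x) = P" "Cod C (u \<cdot> x) = U" by simp_all
  have vy: "arr (v \<cdot> y)" "Dom C (v \<cdot> y) = Z" "Cod C (v \<cdot> y) = V" by simp_all
  obtain k1 k2 where K: "is_pullback C x x k1 k2" using pb_exists[of x x] by auto
  obtain s1 s2 where S: "is_pullback C \<phi> \<phi> s1 s2" using pb_exists[of \<phi> \<phi>] by auto
  obtain e1 e2 where E: "is_pullback C (u \<cdot> x) (u \<cdot> x) e1 e2" using pb_exists[OF ux(1) ux(1)] by auto
  obtain j1 j2 where J: "is_pullback C (v \<cdot> y) (v \<cdot> y) j1 j2" using pb_exists[OF vy(1) vy(1)] by auto
  note DK = pb_D[OF K] and DS = pb_D[OF S] and DE = pb_D[OF E] and DJ = pb_D[OF J]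
  have DE': "Cod C e1 = P" "Cod C e2 = P" using DE ux by simp_all
  have DJ': "Cod C j1 = Z" "Cod C j2 = Z" using DJ vy by simp_all
  have DK': "Cod C k1 = P" "Cod C k2 = P" using DK by simp_all
  have DS': "Cod C s1 = P" "Cod C s2 = P" using DS by simp_all
  have Ecomm: "u \<cdot> (x \<cdot> e1) = u \<cdot> (x \<cdot> e2)" using DE DE' by simp
  have "w \<cdot> (u \<cdot> (x \<cdot> e1)) = w \<cdot> (u \<cdot> (x \<cdot> e2))" using Ecomm by simp
  hence vE: "(v \<cdot> y) \<cdot> (\<phi> \<cdot> e1) = (v \<cdot> y) \<cdot> (\<phi> \<cdot> e2)" using DE DE' by simp
  obtain mE where mE: "arr mE" "Dom C mE = Dom C e1" "Cod C mE = Dom C j1" "j1 \<cdot> mE = \<phi> \<cdot> e1" "j2 \<cdot> mE = \<phi> \<cdot> e2"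
    using pb_ex[OF J, of "\<phi> \<cdot> e1" "\<phi> \<cdot> e2"] DE DE' vE by auto
  have Kcomm: "x \<cdot> k1 = x \<cdot> k2" using DK by simp
  have uK: "(u \<cdot> x) \<cdot> k1 = (u \<cdot> x) \<cdot> k2" using DK DK' Kcomm by simp
  obtain \<iota> where io: "arr \<iota>" "Dom C \<iota> = Dom C k1" "Cod C \<iota> = Dom C e1" "e1 \<cdot> \<iota> = k1" "e2 \<cdot> \<iota> = k2"
    using pb_ex[OF E DK(3) DK(4) _ _ DK(8) uK] DK' ux by auto
  obtain pR1 pR2 where PR: "is_pullback C mE mE pR1 pR2" using pb_exists[OF mE(1) mE(1)] by auto
  have mi: "arr (mE \<cdot> \<iota>)" using mE io DE by simp
  obtain pT1 pT2 where PT: "is_pullback C (mE \<cdot> \<iota>) (mE \<cdot> \<iota>) pT1 pT2" using pb_exists[OF mi mi] by auto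
  note DPR = pb_D[OF PR] and DPT = pb_D[OF PT]
  have DPT': "Cod C pT1 = Dom C k1" "Cod C pT2 = Dom C k1" using DPT io mE DE by simp_all
  have mii: "mE \<cdot> (\<iota> \<cdot> pT1) = mE \<cdot> (\<iota> \<cdot> pT2)"
  proof -
    have "mE \<cdot> (\<iota> \<cdot> pT1) = (mE \<cdot> \<iota>) \<cdot> pT1" using mE io DPT DPT' DE by simp
    also have "\<dots> = (mE \<cdot> \<iota>) \<cdot> pT2" using DPT(9) .
    also have "\<dots> = mE \<cdot> (\<iota> \<cdot> pT2)" using mE io DPT DPT' DE by simp
    finally show ?thesis .
  qed
  obtain jj where jj: "arr jj" "Dom C jj = Dom C pT1" "Cod C jj = Dom C pR1" "pR1 \<cdot> jj = \<iota> \<cdot> pT1" "pR2 \<cdot> jj = \<iota> \<cdot> pT2"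
    using pb_ex[OF PR, of "\<iota> \<cdot> pT1" "\<iota> \<cdot> pT2"] io DPT DPT' mE mii by auto
  have eqE: "equiv_rel C e1 e2" by (rule kp_equiv[OF E])
  have eqS: "equiv_rel C s1 s2" by (rule kp_equiv[OF S])
  have eqK: "equiv_rel C k1 k2" by (rule kp_equiv[OF K])
  have cs: "Cod C s1 = Cod C e1" "Cod C k1 = Cod C e1" using DE' DS' DK' by simp_all
  have RST: "\<forall>a b. gen_pair C (Cod C e1) a b \<and> rel_mem C e1 e2 a b \<and> rel_mem C s1 s2 a b
           \<longrightarrow> rel_mem C k1 k2 a b"
  proof (intro allI impI)
    fix a b assume hh: "gen_pair C (Cod C e1) a b \<and> rel_mem C e1 e2 a b \<and> rel_mem C s1 s2 a b"
    hence g: "arr a" "arr b" "Cod C a = P" "Cod C b = P" "Dom C a = Dom C b"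
      unfolding gen_pair_def using DE' by auto
    have "(u \<cdot> x) \<cdot> a = (u \<cdot> x) \<cdot> b" using hh kp_rel[OF E] by blast
    hence e1': "u \<cdot> (x \<cdot> a) = u \<cdot> (x \<cdot> b)" using g by simp
    have e2': "\<phi> \<cdot> a = \<phi> \<cdot> b" using hh kp_rel[OF S] by blast
    have ab: "a = b" by (rule ouniq) (use g e1' e2' in simp_all)
    show "rel_mem C k1 k2 a b" unfolding ab by (rule kp_rel_intro[OF K]) (use g in simp_all)
  qed
  have TR: "\<forall>a b. gen_pair C (Cod C e1) a b \<and> rel_mem C k1 k2 a b \<longrightarrow> rel_mem C e1 e2 a b"
  proof (intro allI impI)
    fix a b assume hh: "gen_pair C (Cod C e1) a b \<and> rel_mem C k1 k2 a b"
    hence g: "arr a" "arr b" "Cod C a = P" "Cod C b = P" "Dom C a = Dom C b"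
      unfolding gen_pair_def using DE' by auto
    have "x \<cdot> a = x \<cdot> b" using hh kp_rel[OF K] by blast
    hence e1': "(u \<cdot> x) \<cdot> a = (u \<cdot> x) \<cdot> b" using g by simp
    show "rel_mem C e1 e2 a b" by (rule kp_rel_intro[OF E _ _ _ _ _ e1']) (use g in simp_all)
  qed
  have ih: "\<iota> \<in> hom C (Dom C k1) (Dom C e1)" using io unfolding hom_def by simp
  have dR: "is_dbl C e1 e2 s1 s2 pR1 pR2"
    by (rule dbl_kp[OF S _ _ _ _ _ J _ _ mE PR]) (use DE DE' DJ' in simp_all)
  have jm1: "j1 \<cdot> (mE \<cdot> z) = \<phi> \<cdot> (e1 \<cdot> z)" if "arr z" "Cod C z = Dom C e1" for z
    by (rule ext_eq[OF mE(4)]) (use that mE DJ DE DE' in simp_all)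
  have jm2: "j2 \<cdot> (mE \<cdot> z) = \<phi> \<cdot> (e2 \<cdot> z)" if "arr z" "Cod C z = Dom C e1" for z
    by (rule ext_eq[OF mE(5)]) (use that mE DJ DE DE' in simp_all)
  have mEi: "j1 \<cdot> (mE \<cdot> \<iota>) = \<phi> \<cdot> k1" "j2 \<cdot> (mE \<cdot> \<iota>) = \<phi> \<cdot> k2"
    using jm1[OF io(1,3)] jm2[OF io(1,3)] io by simp_all
  have dT: "is_dbl C k1 k2 s1 s2 pT1 pT2"
    by (rule dbl_kp[OF S _ _ _ _ _ J _ _ _ _ _ mEi PT]) (use DK DK' DJ' mE io DE in simp_all)
  have jh: "jj \<in> hom C (Dom C pT1) (Dom C pR1)" using jj unfolding hom_def by simp
  have G: "\<forall>r1 r2 s1 s2 t1 t2 \<iota> pR1 pR2 pT1 pT2 j.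
        equiv_rel C r1 r2 \<and> equiv_rel C s1 s2 \<and> equiv_rel C t1 t2 \<and>
        Cod C s1 = Cod C r1 \<and> Cod C t1 = Cod C r1 \<and>
        (\<forall>x y. gen_pair C (Cod C r1) x y \<and> rel_mem C r1 r2 x y \<and> rel_mem C s1 s2 x y
           \<longrightarrow> rel_mem C t1 t2 x y) \<and>
        (\<forall>x y. gen_pair C (Cod C r1) x y \<and> rel_mem C t1 t2 x y \<longrightarrow> rel_mem C r1 r2 x y) \<and>
        \<iota> \<in> hom C (Dom C t1) (Dom C r1) \<and> Cmp C r1 \<iota> = t1 \<and> Cmp C r2 \<iota> = t2 \<and>
        is_dbl C r1 r2 s1 s2 pR1 pR2 \<and> is_dbl C t1 t2 s1 s2 pT1 pT2 \<and>
        j \<in> hom C (Dom C pT1) (Dom C pR1) \<and>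
        Cmp C pR1 j = Cmp C \<iota> pT1 \<and> Cmp C pR2 j = Cmp C \<iota> pT2
        \<longrightarrow> is_pullback C pR1 \<iota> j pT1 \<and> is_pullback C pR2 \<iota> j pT2"
    using gm unfolding gumm_def by (elim conjE)
  have GP: "is_pullback C pR1 \<iota> jj pT1 \<and> is_pullback C pR2 \<iota> jj pT2"
    using eqE eqS eqK cs RST TR ih io(4) io(5) dR dT jh jj(4) jj(5)
    by (intro G[rule_format] conjI) assumption+
  hence GP1: "is_pullback C pR1 \<iota> jj pT1" by simp
  obtain kk where kk: "arr kk" "Dom C kk = Dom C q1" "Cod C kk = Dom C k1" "k1 \<cdot> kk = q1" "k2 \<cdot> kk = q2"
    using pb_ex[OF K q(1,2)] q h by auto
  have "(u \<cdot> x) \<cdot> s = (u \<cdot> x) \<cdot> s'" using q h by simp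
  then obtain ee where ee: "arr ee" "Dom C ee = Dom C s" "Cod C ee = Dom C e1" "e1 \<cdot> ee = s" "e2 \<cdot> ee = s'"
    using pb_ex[OF E q(3,4)] q by auto
  have ikk: "arr (\<iota> \<cdot> kk)" "Cod C (\<iota> \<cdot> kk) = Dom C e1" "Dom C (\<iota> \<cdot> kk) = Dom C q1"
    using io kk by simp_all
  have e1i: "e1 \<cdot> (\<iota> \<cdot> kk) = q1" "e2 \<cdot> (\<iota> \<cdot> kk) = q2"
    using assoc_eq[OF io(4)] assoc_eq[OF io(5)] io kk DE by simp_all
  have "mE \<cdot> (\<iota> \<cdot> kk) = mE \<cdot> ee"
  proof (rule jm_pb[OF J])
    show "j1 \<cdot> (mE \<cdot> (\<iota> \<cdot> kk)) = j1 \<cdot> (mE \<cdot> ee)"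
      unfolding jm1[OF ikk(1,2)] jm1[OF ee(1,3)] e1i ee(4) using h by simp
    show "j2 \<cdot> (mE \<cdot> (\<iota> \<cdot> kk)) = j2 \<cdot> (mE \<cdot> ee)"
      unfolding jm2[OF ikk(1,2)] jm2[OF ee(1,3)] e1i ee(5) using h by simp
  qed (use mE ikk ee q in simp_all)
  then obtain tt where tt: "arr tt" "Dom C tt = Dom C (\<iota> \<cdot> kk)" "Cod C tt = Dom C pR1"
     "pR1 \<cdot> tt = \<iota> \<cdot> kk" "pR2 \<cdot> tt = ee"
    using pb_ex[OF PR ikk(1) ee(1)] ikk ee mE q by auto
  obtain t' where t': "arr t'" "Dom C t' = Dom C tt" "Cod C t' = Dom C jj" "jj \<cdot> t' = tt" "pT1 \<cdot> t' = kk"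
    using pb_ex[OF GP1 tt(1) kk(1)] tt kk io DPR by auto
  have a1: "pR2 \<cdot> (jj \<cdot> t') = (\<iota> \<cdot> pT2) \<cdot> t'"
    by (rule assoc_eq[OF jj(5)]) (use jj t' DPR in simp_all)
  have pT2a: "arr pT2" "Cod C pT2 = Dom C k1" "Dom C pT2 = Dom C pT1" using DPT DPT' by simp_all
  have "(\<iota> \<cdot> pT2) \<cdot> t' = \<iota> \<cdot> (pT2 \<cdot> t')"
    by (rule assoc) (use io(1,2) pT2a t'(1,3) jj(2) in simp_all)
  hence ee2: "ee = \<iota> \<cdot> (pT2 \<cdot> t')" using a1 tt(5) t'(4) by simp
  have z: "arr (pT2 \<cdot> t')" "Cod C (pT2 \<cdot> t') = Dom C k1" using DPT DPT' t' jj by simp_all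
  have "s = e1 \<cdot> (\<iota> \<cdot> (pT2 \<cdot> t'))" using ee ee2 by simp
  also have "\<dots> = k1 \<cdot> (pT2 \<cdot> t')" using io z DE by (simp flip: assoc)
  finally have sk: "s = k1 \<cdot> (pT2 \<cdot> t')" .
  have "s' = e2 \<cdot> (\<iota> \<cdot> (pT2 \<cdot> t'))" using ee ee2 by simp
  also have "\<dots> = k2 \<cdot> (pT2 \<cdot> t')" using io z DE by (simp flip: assoc)
  finally have sk': "s' = k2 \<cdot> (pT2 \<cdot> t')" .
  show ?thesis unfolding sk sk' by (rule pb_comm[OF K z])
qed

end

context PS begin

lemma transport: assumes "arr p'" "arr q" "Cod C p' = P" "Cod C q = P" "Dom C p' = Dom C q"
   "v \<cdot> (y \<cdot> (\<phi> \<cdot> p')) = v \<cdot> (y \<cdot> (\<phi> \<cdot> q))"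
  obtains s where "arr s" "Dom C s = Dom C q" "Cod C s = P" "u \<cdot> (x \<cdot> s) = u \<cdot> (x \<cdot> p')" "\<phi> \<cdot> s = \<phi> \<cdot> q"
proof -
  have e: "w \<cdot> (u \<cdot> (x \<cdot> p')) = v \<cdot> (y \<cdot> (\<phi> \<cdot> q))" using assms by simp
  obtain t where "arr t" "Dom C t = Dom C (u \<cdot> (x \<cdot> p'))" "Cod C t = P" "u \<cdot> (x \<cdot> t) = u \<cdot> (x \<cdot> p')" "\<phi> \<cdot> t = \<phi> \<cdot> q"
    by (rule opair[of "u \<cdot> (x \<cdot> p')" "\<phi> \<cdot> q"]) (use assms e in simp_all)
  thus ?thesis using that assms by simp
qed

end

locale PSL = PS +
  fixes n1 n2 f1 f2 l1 l2 c1 c2 \<sigma> T r2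
  assumes N: "is_pullback C u (u \<cdot> x) n2 n1"
    and F: "is_pullback C (v \<cdot> (y \<cdot> \<phi>)) (v \<cdot> (y \<cdot> \<phi>)) f1 f2"
    and L: "is_pullback C f1 n1 l2 l1"
    and CV: "is_pullback C x (n2 \<cdot> l1) c2 c1" and rc1: "regular_epi C c1"
    and \<sigma>: "arr \<sigma>" "Dom C \<sigma> = Dom C c1" "Cod C \<sigma> = P" "u \<cdot> (x \<cdot> \<sigma>) = u \<cdot> (x \<cdot> (f2 \<cdot> (l2 \<cdot> c1)))"
       "\<phi> \<cdot> \<sigma> = \<phi> \<cdot> c2"
    and T: "arr T" "Dom C T = Dom C l1" "Cod C T = X" "T \<cdot> c1 = x \<cdot> \<sigma>"
    and r2: "arr r2" "Dom C r2 = Dom C l1" "Cod C r2 = Dom C n1" "n1 \<cdot> r2 = f2 \<cdot> l2" "n2 \<cdot> r2 = T"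
begin

lemma Nf[simp]: "arr n1" "arr n2" "Cod C n1 = P" "Cod C n2 = X" "Dom C n2 = Dom C n1"
  using pb_D[OF N] by simp_all
lemma Ff[simp]: "arr f1" "arr f2" "Cod C f1 = P" "Cod C f2 = P" "Dom C f2 = Dom C f1"
  using pb_D[OF F] by simp_all
lemma Lf[simp]: "arr l1" "arr l2" "Cod C l1 = Dom C n1" "Cod C l2 = Dom C f1" "Dom C l2 = Dom C l1"
  using pb_D[OF L] by simp_all
lemma Cf[simp]: "arr c1" "arr c2" "Cod C c1 = Dom C l1" "Cod C c2 = P" "Dom C c2 = Dom C c1"
  using pb_D[OF CV] by simp_all
lemma Tf[simp]: "arr T" "Dom C T = Dom C l1" "Cod C T = X" "arr r2" "Dom C r2 = Dom C l1" "Cod C r2 = Dom C n1"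
  "arr \<sigma>" "Dom C \<sigma> = Dom C c1" "Cod C \<sigma> = P"
  using T r2 \<sigma> by simp_all

lemma Ncomm: "arr t \<Longrightarrow> Cod C t = Dom C n1 \<Longrightarrow> u \<cdot> (n2 \<cdot> t) = u \<cdot> (x \<cdot> (n1 \<cdot> t))"
  using pb_comm[OF N, of t] by simp
lemma Fcomm: "arr t \<Longrightarrow> Cod C t = Dom C f1 \<Longrightarrow> v \<cdot> (y \<cdot> (\<phi> \<cdot> (f1 \<cdot> t))) = v \<cdot> (y \<cdot> (\<phi> \<cdot> (f2 \<cdot> t)))"
  using pb_comm[OF F, of t] by simp
lemma Lcomm[simp]: "arr t \<Longrightarrow> Cod C t = Dom C l1 \<Longrightarrow> f1 \<cdot> (l2 \<cdot> t) = n1 \<cdot> (l1 \<cdot> t)"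
  using pb_comm[OF L, of t] by simp
lemma CVcomm: "arr t \<Longrightarrow> Cod C t = Dom C c1 \<Longrightarrow> x \<cdot> (c2 \<cdot> t) = n2 \<cdot> (l1 \<cdot> (c1 \<cdot> t))"
  using pb_comm[OF CV, of t] by simp
lemma r2c[simp]: "arr t \<Longrightarrow> Cod C t = Dom C l1 \<Longrightarrow> n1 \<cdot> (r2 \<cdot> t) = f2 \<cdot> (l2 \<cdot> t)"
  "arr t \<Longrightarrow> Cod C t = Dom C l1 \<Longrightarrow> n2 \<cdot> (r2 \<cdot> t) = T \<cdot> t"
  using assoc_eq[OF r2(4), of t] assoc_eq[OF r2(5), of t] by simp_all

lemma mkN: assumes "arr a" "arr b" "Cod C a = P" "Cod C b = X" "Dom C a = Dom C b"
   "u \<cdot> b = u \<cdot> (x \<cdot> a)"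
  obtains n where "arr n" "Dom C n = Dom C a" "Cod C n = Dom C n1" "n1 \<cdot> n = a" "n2 \<cdot> n = b"
proof -
  have e: "u \<cdot> b = (u \<cdot> x) \<cdot> a" using assms by simp
  obtain n where "arr n" "Dom C n = Dom C b" "Cod C n = Dom C n2" "n2 \<cdot> n = b" "n1 \<cdot> n = a"
    using pb_ex[OF N assms(2,1) _ _ _ e] assms by auto
  thus ?thesis using that assms by simp
qed

lemma mkF: assumes "arr a" "arr b" "Cod C a = P" "Cod C b = P" "Dom C a = Dom C b"
   "v \<cdot> (y \<cdot> (\<phi> \<cdot> a)) = v \<cdot> (y \<cdot> (\<phi> \<cdot> b))"
  obtains d where "arr d" "Dom C d = Dom C a" "Cod C d = Dom C f1" "f1 \<cdot> d = a" "f2 \<cdot> d = b"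
proof -
  have e: "(v \<cdot> (y \<cdot> \<phi>)) \<cdot> a = (v \<cdot> (y \<cdot> \<phi>)) \<cdot> b" using assms by simp
  obtain d where "arr d" "Dom C d = Dom C a" "Cod C d = Dom C f1" "f1 \<cdot> d = a" "f2 \<cdot> d = b"
    using pb_ex[OF F assms(1,2) _ _ assms(5) e] assms by auto
  thus ?thesis using that by simp
qed

lemma mkL: assumes "arr n" "arr d" "Cod C n = Dom C n1" "Cod C d = Dom C f1" "Dom C n = Dom C d"
   "f1 \<cdot> d = n1 \<cdot> n"
  obtains l where "arr l" "Dom C l = Dom C n" "Cod C l = Dom C l1" "l1 \<cdot> l = n" "l2 \<cdot> l = d"
proof -
  obtain l where "arr l" "Dom C l = Dom C d" "Cod C l = Dom C l2" "l2 \<cdot> l = d" "l1 \<cdot> l = n"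
    using pb_ex[OF L assms(2,1) _ _ _ assms(6)] assms by auto
  thus ?thesis using that assms by simp
qed

lemma N_uniq: "arr a \<Longrightarrow> arr b \<Longrightarrow> Cod C a = Dom C n1 \<Longrightarrow> Cod C b = Dom C n1 \<Longrightarrow> Dom C a = Dom C b
   \<Longrightarrow> n1 \<cdot> a = n1 \<cdot> b \<Longrightarrow> n2 \<cdot> a = n2 \<cdot> b \<Longrightarrow> a = b"
  by (rule pb_uniq[OF N]) simp_all
lemma F_uniq: "arr a \<Longrightarrow> arr b \<Longrightarrow> Cod C a = Dom C f1 \<Longrightarrow> Cod C b = Dom C f1 \<Longrightarrow> Dom C a = Dom C b
   \<Longrightarrow> f1 \<cdot> a = f1 \<cdot> b \<Longrightarrow> f2 \<cdot> a = f2 \<cdot> b \<Longrightarrow> a = b"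
  by (rule pb_uniq[OF F]) simp_all
lemma L_uniq: "arr a \<Longrightarrow> arr b \<Longrightarrow> Cod C a = Dom C l1 \<Longrightarrow> Cod C b = Dom C l1 \<Longrightarrow> Dom C a = Dom C b
   \<Longrightarrow> l1 \<cdot> a = l1 \<cdot> b \<Longrightarrow> l2 \<cdot> a = l2 \<cdot> b \<Longrightarrow> a = b"
  by (rule pb_uniq[OF L]) simp_all

lemma Tform: assumes l: "arr l" "Cod C l = Dom C l1" and q: "arr q" "Cod C q = P" "Dom C q = Dom C l"
    "x \<cdot> q = n2 \<cdot> (l1 \<cdot> l)"
    and s: "arr s" "Cod C s = P" "Dom C s = Dom C l" "u \<cdot> (x \<cdot> s) = u \<cdot> (x \<cdot> (f2 \<cdot> (l2 \<cdot> l)))"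
      "\<phi> \<cdot> s = \<phi> \<cdot> q"
  shows "T \<cdot> l = x \<cdot> s"
proof -
  have e: "x \<cdot> q = (n2 \<cdot> l1) \<cdot> l" using q l by simp
  obtain d where d: "arr d" "Dom C d = Dom C q" "Cod C d = Dom C c2" "c2 \<cdot> d = q" "c1 \<cdot> d = l"
    using pb_ex[OF CV q(1) l(1) _ _ _ e] q l by auto
  have d': "Cod C d = Dom C c1" using d by simp
  have "u \<cdot> (x \<cdot> (\<sigma> \<cdot> d)) = (u \<cdot> (x \<cdot> \<sigma>)) \<cdot> d" using d' d by simp
  also have "\<dots> = (u \<cdot> (x \<cdot> (f2 \<cdot> (l2 \<cdot> c1)))) \<cdot> d" using \<sigma>(4) by simp
  also have "\<dots> = u \<cdot> (x \<cdot> (f2 \<cdot> (l2 \<cdot> (c1 \<cdot> d))))" using d' d by simp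
  also have "\<dots> = u \<cdot> (x \<cdot> s)" using d(5) s(4) by simp
  finally have e1: "u \<cdot> (x \<cdot> (\<sigma> \<cdot> d)) = u \<cdot> (x \<cdot> s)" .
  have "\<phi> \<cdot> (\<sigma> \<cdot> d) = (\<phi> \<cdot> \<sigma>) \<cdot> d" using d' d by simp
  also have "\<dots> = (\<phi> \<cdot> c2) \<cdot> d" using \<sigma>(5) by simp
  also have "\<dots> = \<phi> \<cdot> s" using d' d s(5) by simp
  finally have e2: "\<phi> \<cdot> (\<sigma> \<cdot> d) = \<phi> \<cdot> s" .
  have sd: "\<sigma> \<cdot> d = s" by (rule ouniq) (use d d' s e1 e2 q in simp_all)
  have "T \<cdot> l = T \<cdot> (c1 \<cdot> d)" using d by simp
  also have "\<dots> = (x \<cdot> \<sigma>) \<cdot> d" by (rule assoc_eq[OF T(4)]) (use d d' in simp_all)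
  also have "\<dots> = x \<cdot> s" using sd d d' by simp
  finally show ?thesis .
qed

lemma VV: assumes l: "arr l" "Cod C l = Dom C l1" and q: "arr q" "Cod C q = P" "Dom C q = Dom C l"
    "x \<cdot> q = n2 \<cdot> (l1 \<cdot> l)"
  shows "v \<cdot> (y \<cdot> (\<phi> \<cdot> (f2 \<cdot> (l2 \<cdot> l)))) = v \<cdot> (y \<cdot> (\<phi> \<cdot> q))"
proof -
  have a: "arr (l1 \<cdot> l)" "Cod C (l1 \<cdot> l) = Dom C n1" using l by simp_all
  have "v \<cdot> (y \<cdot> (\<phi> \<cdot> q)) = w \<cdot> (u \<cdot> (x \<cdot> q))" using q(1-3) by simp
  also have "\<dots> = w \<cdot> (u \<cdot> (n2 \<cdot> (l1 \<cdot> l)))" by (simp only: q(4))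
  also have "\<dots> = w \<cdot> (u \<cdot> (x \<cdot> (n1 \<cdot> (l1 \<cdot> l))))" by (simp only: Ncomm[OF a])
  also have "\<dots> = v \<cdot> (y \<cdot> (\<phi> \<cdot> (n1 \<cdot> (l1 \<cdot> l))))" using a by simp
  also have "\<dots> = v \<cdot> (y \<cdot> (\<phi> \<cdot> (f1 \<cdot> (l2 \<cdot> l))))" using l by simp
  also have "\<dots> = v \<cdot> (y \<cdot> (\<phi> \<cdot> (f2 \<cdot> (l2 \<cdot> l))))" by (rule Fcomm) (use l in simp_all)
  finally show ?thesis by simp
qed

lemma TL: assumes l: "arr l" "Cod C l = Dom C l1" and q: "arr q" "Cod C q = P" "Dom C q = Dom C l"
    "x \<cdot> q = n2 \<cdot> (l1 \<cdot> l)"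
  obtains s where "arr s" "Cod C s = P" "Dom C s = Dom C l" "u \<cdot> (x \<cdot> s) = u \<cdot> (x \<cdot> (f2 \<cdot> (l2 \<cdot> l)))"
      "\<phi> \<cdot> s = \<phi> \<cdot> q" "T \<cdot> l = x \<cdot> s"
proof -
  obtain s where s: "arr s" "Dom C s = Dom C q" "Cod C s = P" "u \<cdot> (x \<cdot> s) = u \<cdot> (x \<cdot> (f2 \<cdot> (l2 \<cdot> l)))"
      "\<phi> \<cdot> s = \<phi> \<cdot> q"
    by (rule transport[of "f2 \<cdot> (l2 \<cdot> l)" q]) (use l q VV[OF l q] in simp_all)
  have "T \<cdot> l = x \<cdot> s" by (rule Tform[OF l q]) (use s q in simp_all)
  thus ?thesis using that s q by simp
qed

lemma lcover: assumes l: "arr l" "Cod C l = Dom C l1"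
  obtains e q where "regular_epi C e" "arr e" "Cod C e = Dom C l" "arr q" "Cod C q = P" "Dom C q = Dom C e"
    "x \<cdot> q = n2 \<cdot> (l1 \<cdot> (l \<cdot> e))"
proof -
  have a: "arr (n2 \<cdot> (l1 \<cdot> l))" "Cod C (n2 \<cdot> (l1 \<cdot> l)) = Cod C x" using l by simp_all
  obtain e q where eq: "regular_epi C e" "arr e" "arr q" "Cod C e = Dom C (n2 \<cdot> (l1 \<cdot> l))" "Dom C q = Dom C e"
     "Cod C q = Dom C x" "x \<cdot> q = (n2 \<cdot> (l1 \<cdot> l)) \<cdot> e"
    by (rule cover[OF rex a])
  show ?thesis by (rule that[of e q]) (use eq l in simp_all)
qed

lemma lam_refl: assumes l: "arr l" "Cod C l = Dom C l1" "f2 \<cdot> (l2 \<cdot> l) = n1 \<cdot> (l1 \<cdot> l)"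
  shows "T \<cdot> l = n2 \<cdot> (l1 \<cdot> l)"
proof -
  obtain e q where e: "regular_epi C e" "arr e" "Cod C e = Dom C l" "arr q" "Cod C q = P" "Dom C q = Dom C e"
    "x \<cdot> q = n2 \<cdot> (l1 \<cdot> (l \<cdot> e))" by (rule lcover[OF l(1,2)])
  have le: "arr (l \<cdot> e)" "Cod C (l \<cdot> e) = Dom C l1" "Dom C (l \<cdot> e) = Dom C e" using l e by simp_all
  have f2e: "f2 \<cdot> (l2 \<cdot> (l \<cdot> e)) = n1 \<cdot> (l1 \<cdot> (l \<cdot> e))"
  proof -
    have "f2 \<cdot> (l2 \<cdot> (l \<cdot> e)) = (f2 \<cdot> (l2 \<cdot> l)) \<cdot> e" using l(1,2) e(2,3) by simp
    also have "\<dots> = (n1 \<cdot> (l1 \<cdot> l)) \<cdot> e" using l(3) by simp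
    also have "\<dots> = n1 \<cdot> (l1 \<cdot> (l \<cdot> e))" using l(1,2) e(2,3) by simp
    finally show ?thesis .
  qed
  have a: "arr (l1 \<cdot> (l \<cdot> e))" "Cod C (l1 \<cdot> (l \<cdot> e)) = Dom C n1" using le by simp_all
  have "u \<cdot> (x \<cdot> q) = u \<cdot> (n2 \<cdot> (l1 \<cdot> (l \<cdot> e)))" by (simp only: e(7))
  also have "\<dots> = u \<cdot> (x \<cdot> (n1 \<cdot> (l1 \<cdot> (l \<cdot> e))))" by (rule Ncomm[OF a])
  also have "\<dots> = u \<cdot> (x \<cdot> (f2 \<cdot> (l2 \<cdot> (l \<cdot> e))))" by (simp only: f2e)
  finally have uq: "u \<cdot> (x \<cdot> q) = u \<cdot> (x \<cdot> (f2 \<cdot> (l2 \<cdot> (l \<cdot> e))))" .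
  have "T \<cdot> (l \<cdot> e) = x \<cdot> q" by (rule Tform[OF le(1,2) _ _ _ e(7)]) (use e le uq in simp_all)
  hence "(T \<cdot> l) \<cdot> e = (n2 \<cdot> (l1 \<cdot> l)) \<cdot> e" using l e by simp
  thus ?thesis by (rule epi[OF e(1), rotated -1]) (use l e in simp_all)
qed

lemma lam_inv: assumes l: "arr l" "Cod C l = Dom C l1"
    and l': "arr l'" "Cod C l' = Dom C l1" "Dom C l' = Dom C l" "l1 \<cdot> l' = r2 \<cdot> l"
      "f2 \<cdot> (l2 \<cdot> l') = f1 \<cdot> (l2 \<cdot> l)"
  shows "T \<cdot> l' = n2 \<cdot> (l1 \<cdot> l)"
proof -
  obtain e q where e: "regular_epi C e" "arr e" "Cod C e = Dom C l" "arr q" "Cod C q = P" "Dom C q = Dom C e"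
    "x \<cdot> q = n2 \<cdot> (l1 \<cdot> (l \<cdot> e))" by (rule lcover[OF l(1,2)])
  have le: "arr (l \<cdot> e)" "Cod C (l \<cdot> e) = Dom C l1" "Dom C (l \<cdot> e) = Dom C e" using l e by simp_all
  have le': "arr (l' \<cdot> e)" "Cod C (l' \<cdot> e) = Dom C l1" "Dom C (l' \<cdot> e) = Dom C e" using l' l e by simp_all
  obtain s where s: "arr s" "Cod C s = P" "Dom C s = Dom C (l \<cdot> e)"
      "u \<cdot> (x \<cdot> s) = u \<cdot> (x \<cdot> (f2 \<cdot> (l2 \<cdot> (l \<cdot> e))))" "\<phi> \<cdot> s = \<phi> \<cdot> q" "T \<cdot> (l \<cdot> e) = x \<cdot> s"
    by (rule TL[OF le(1,2) e(4,5) _ e(7)]) (use e le in simp_all)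
  have x1: "l1 \<cdot> (l' \<cdot> e) = r2 \<cdot> (l \<cdot> e)" by (rule ext_eq[OF l'(4)]) (use l l' e in simp_all)
  have "x \<cdot> s = n2 \<cdot> (r2 \<cdot> (l \<cdot> e))" using s(6) le by simp
  hence xs: "x \<cdot> s = n2 \<cdot> (l1 \<cdot> (l' \<cdot> e))" using x1 by simp
  have x2: "f2 \<cdot> (l2 \<cdot> (l' \<cdot> e)) = n1 \<cdot> (l1 \<cdot> (l \<cdot> e))"
  proof -
    have "f2 \<cdot> (l2 \<cdot> (l' \<cdot> e)) = (f2 \<cdot> (l2 \<cdot> l')) \<cdot> e" using l'(1,2) e(2,3) l'(3) by simp
    also have "\<dots> = (f1 \<cdot> (l2 \<cdot> l)) \<cdot> e" using l'(5) by simp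
    also have "\<dots> = n1 \<cdot> (l1 \<cdot> (l \<cdot> e))" using l(1,2) e(2,3) by simp
    finally show ?thesis .
  qed
  have a: "arr (l1 \<cdot> (l \<cdot> e))" "Cod C (l1 \<cdot> (l \<cdot> e)) = Dom C n1" using le by simp_all
  have "u \<cdot> (x \<cdot> q) = u \<cdot> (n2 \<cdot> (l1 \<cdot> (l \<cdot> e)))" by (simp only: e(7))
  also have "\<dots> = u \<cdot> (x \<cdot> (n1 \<cdot> (l1 \<cdot> (l \<cdot> e))))" by (rule Ncomm[OF a])
  also have "\<dots> = u \<cdot> (x \<cdot> (f2 \<cdot> (l2 \<cdot> (l' \<cdot> e))))" by (simp only: x2)
  finally have uq: "u \<cdot> (x \<cdot> q) = u \<cdot> (x \<cdot> (f2 \<cdot> (l2 \<cdot> (l' \<cdot> e))))" .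
  have "T \<cdot> (l' \<cdot> e) = x \<cdot> q" by (rule Tform[OF le'(1,2) s(1,2) _ xs e(4,5) _ uq]) (use s e le le' in simp_all)
  hence "(T \<cdot> l') \<cdot> e = (n2 \<cdot> (l1 \<cdot> l)) \<cdot> e" using l l' e by simp
  thus ?thesis by (rule epi[OF e(1), rotated -1]) (use l l' e in simp_all)
qed

lemma lam_trans: assumes la: "arr la" "Cod C la = Dom C l1" and lb: "arr lb" "Cod C lb = Dom C l1"
    and lc: "arr lc" "Cod C lc = Dom C l1"
    and d: "Dom C lb = Dom C la" "Dom C lc = Dom C la"
    and h: "r2 \<cdot> la = l1 \<cdot> lb" "l1 \<cdot> lc = l1 \<cdot> la" "f2 \<cdot> (l2 \<cdot> lc) = f2 \<cdot> (l2 \<cdot> lb)"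
  shows "T \<cdot> lc = T \<cdot> lb"
proof -
  obtain e q where e: "regular_epi C e" "arr e" "Cod C e = Dom C la" "arr q" "Cod C q = P" "Dom C q = Dom C e"
    "x \<cdot> q = n2 \<cdot> (l1 \<cdot> (la \<cdot> e))" by (rule lcover[OF la(1,2)])
  have lae: "arr (la \<cdot> e)" "Cod C (la \<cdot> e) = Dom C l1" "Dom C (la \<cdot> e) = Dom C e" using la e by simp_all
  have lbe: "arr (lb \<cdot> e)" "Cod C (lb \<cdot> e) = Dom C l1" "Dom C (lb \<cdot> e) = Dom C e" using lb e d by simp_all
  have lce: "arr (lc \<cdot> e)" "Cod C (lc \<cdot> e) = Dom C l1" "Dom C (lc \<cdot> e) = Dom C e" using lc e d by simp_all
  obtain s1 where s1: "arr s1" "Cod C s1 = P" "Dom C s1 = Dom C (la \<cdot> e)"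
      "u \<cdot> (x \<cdot> s1) = u \<cdot> (x \<cdot> (f2 \<cdot> (l2 \<cdot> (la \<cdot> e))))" "\<phi> \<cdot> s1 = \<phi> \<cdot> q" "T \<cdot> (la \<cdot> e) = x \<cdot> s1"
    by (rule TL[OF lae(1,2) e(4,5) _ e(7)]) (use e lae in simp_all)
  have x1: "r2 \<cdot> (la \<cdot> e) = l1 \<cdot> (lb \<cdot> e)" by (rule ext_eq[OF h(1)]) (use la lb e d in simp_all)
  have "x \<cdot> s1 = n2 \<cdot> (r2 \<cdot> (la \<cdot> e))" using s1(6) lae by simp
  hence xs1: "x \<cdot> s1 = n2 \<cdot> (l1 \<cdot> (lb \<cdot> e))" using x1 by simp
  obtain s2 where s2: "arr s2" "Cod C s2 = P" "Dom C s2 = Dom C (lb \<cdot> e)"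
      "u \<cdot> (x \<cdot> s2) = u \<cdot> (x \<cdot> (f2 \<cdot> (l2 \<cdot> (lb \<cdot> e))))" "\<phi> \<cdot> s2 = \<phi> \<cdot> s1" "T \<cdot> (lb \<cdot> e) = x \<cdot> s2"
    by (rule TL[OF lbe(1,2) s1(1,2) _ xs1]) (use s1 lbe lae in simp_all)
  have x2: "l1 \<cdot> (lc \<cdot> e) = l1 \<cdot> (la \<cdot> e)" by (rule ext_eq[OF h(2)]) (use la lc e d in simp_all)
  have x3: "f2 \<cdot> (l2 \<cdot> (lc \<cdot> e)) = f2 \<cdot> (l2 \<cdot> (lb \<cdot> e))"
  proof -
    have "f2 \<cdot> (l2 \<cdot> (lc \<cdot> e)) = (f2 \<cdot> (l2 \<cdot> lc)) \<cdot> e" using lc e d by simp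
    also have "\<dots> = (f2 \<cdot> (l2 \<cdot> lb)) \<cdot> e" using h(3) by simp
    also have "\<dots> = f2 \<cdot> (l2 \<cdot> (lb \<cdot> e))" using lb e d by simp
    finally show ?thesis .
  qed
  have xq: "x \<cdot> q = n2 \<cdot> (l1 \<cdot> (lc \<cdot> e))" using e(7) x2 by simp
  have "T \<cdot> (lc \<cdot> e) = x \<cdot> s2"
    by (rule Tform[OF lce(1,2) e(4,5) _ xq s2(1,2)]) (use s1 s2 e lce lbe lae x3 in simp_all)
  hence "(T \<cdot> lc) \<cdot> e = (T \<cdot> lb) \<cdot> e" using s2(6) lc lb e d by simp
  thus ?thesis by (rule epi[OF e(1), rotated -1]) (use lc lb e d in simp_all)
qed

end

context PSL begin

lemma VYF: assumes "arr d" "Cod C d = Dom C f1"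
  shows "v \<cdot> (y \<cdot> (\<phi> \<cdot> (f2 \<cdot> d))) = v \<cdot> (y \<cdot> (\<phi> \<cdot> (f1 \<cdot> d)))"
  using Fcomm[OF assms] by simp

lemma lam_equiv: "equiv_rel C l1 r2"
proof -
  have jm: "\<forall>a b. gen_pair C (Dom C l1) a b \<and> l1 \<cdot> a = l1 \<cdot> b \<and> r2 \<cdot> a = r2 \<cdot> b \<longrightarrow> a = b"
  proof (intro allI impI)
    fix a b assume h: "gen_pair C (Dom C l1) a b \<and> l1 \<cdot> a = l1 \<cdot> b \<and> r2 \<cdot> a = r2 \<cdot> b"
    hence g: "arr a" "arr b" "Cod C a = Dom C l1" "Cod C b = Dom C l1" "Dom C a = Dom C b"
      and h1: "l1 \<cdot> a = l1 \<cdot> b" and h2: "r2 \<cdot> a = r2 \<cdot> b" unfolding gen_pair_def by auto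
    have "n1 \<cdot> (l1 \<cdot> a) = n1 \<cdot> (l1 \<cdot> b)" by (simp only: h1)
    hence e1: "f1 \<cdot> (l2 \<cdot> a) = f1 \<cdot> (l2 \<cdot> b)" using g by simp
    have "n1 \<cdot> (r2 \<cdot> a) = n1 \<cdot> (r2 \<cdot> b)" by (simp only: h2)
    hence e2: "f2 \<cdot> (l2 \<cdot> a) = f2 \<cdot> (l2 \<cdot> b)" using g by simp
    have l2eq: "l2 \<cdot> a = l2 \<cdot> b" by (rule F_uniq) (use g e1 e2 in simp_all)
    note l2e = l2eq
    show "a = b" by (rule L_uniq) (use g h1 l2e in simp_all)
  qed
  have rf: "\<forall>n\<in>Arr C. Cod C n = Cod C l1 \<longrightarrow> rel_mem C l1 r2 n n"
  proof (intro ballI impI)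
    fix n assume n: "arr n" "Cod C n = Cod C l1"
    hence n': "Cod C n = Dom C n1" by simp
    obtain d where d: "arr d" "Dom C d = Dom C (n1 \<cdot> n)" "Cod C d = Dom C f1" "f1 \<cdot> d = n1 \<cdot> n" "f2 \<cdot> d = n1 \<cdot> n"
      by (rule mkF[of "n1 \<cdot> n" "n1 \<cdot> n"]) (use n n' in simp_all)
    obtain l where l: "arr l" "Dom C l = Dom C n" "Cod C l = Dom C l1" "l1 \<cdot> l = n" "l2 \<cdot> l = d"
      by (rule mkL[of n d]) (use n n' d in simp_all)
    have f2l: "f2 \<cdot> (l2 \<cdot> l) = n1 \<cdot> (l1 \<cdot> l)" using l d by simp
    have Tl: "T \<cdot> l = n2 \<cdot> (l1 \<cdot> l)" by (rule lam_refl[OF l(1,3) f2l])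
    have "r2 \<cdot> l = n"
    proof (rule N_uniq)
      show "n1 \<cdot> (r2 \<cdot> l) = n1 \<cdot> n" using l d by simp
      show "n2 \<cdot> (r2 \<cdot> l) = n2 \<cdot> n" using l Tl by simp
    qed (use l n n' in simp_all)
    thus "rel_mem C l1 r2 n n" unfolding rel_mem_def using l by auto
  qed
  have sy: "\<forall>a b. gen_pair C (Cod C l1) a b \<and> rel_mem C l1 r2 a b \<longrightarrow> rel_mem C l1 r2 b a"
  proof (intro allI impI)
    fix a b assume h: "gen_pair C (Cod C l1) a b \<and> rel_mem C l1 r2 a b"
    then obtain l where l: "arr l" "Cod C l = Dom C l1" "l1 \<cdot> l = a" "r2 \<cdot> l = b"
      unfolding rel_mem_def by auto
    have g: "arr a" "arr b" "Cod C a = Dom C n1" "Cod C b = Dom C n1" "Dom C a = Dom C b" "Dom C a = Dom C l"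
      using h l(1,2) l(3)[symmetric] unfolding gen_pair_def by auto
    obtain d where d: "arr d" "Dom C d = Dom C (f2 \<cdot> (l2 \<cdot> l))" "Cod C d = Dom C f1"
        "f1 \<cdot> d = f2 \<cdot> (l2 \<cdot> l)" "f2 \<cdot> d = f1 \<cdot> (l2 \<cdot> l)"
      by (rule mkF[of "f2 \<cdot> (l2 \<cdot> l)" "f1 \<cdot> (l2 \<cdot> l)"]) (use l(1,2) VYF[of "l2 \<cdot> l"] in simp_all)
    have f1d: "f1 \<cdot> d = n1 \<cdot> (r2 \<cdot> l)" using d l(1,2) by simp
    obtain l' where l': "arr l'" "Dom C l' = Dom C (r2 \<cdot> l)" "Cod C l' = Dom C l1" "l1 \<cdot> l' = r2 \<cdot> l" "l2 \<cdot> l' = d"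
      by (rule mkL[of "r2 \<cdot> l" d]) (use l(1,2) d f1d in simp_all)
    have Tl': "T \<cdot> l' = n2 \<cdot> (l1 \<cdot> l)" by (rule lam_inv[OF l(1,2) l'(1,3)]) (use l(1,2) l' d in simp_all)
    have "r2 \<cdot> l' = a"
    proof (rule N_uniq)
      show "n1 \<cdot> (r2 \<cdot> l') = n1 \<cdot> a" using l l' d by simp
      show "n2 \<cdot> (r2 \<cdot> l') = n2 \<cdot> a" using l l' Tl' by simp
    qed (use l(1,2) l' g in simp_all)
    thus "rel_mem C l1 r2 b a" unfolding rel_mem_def using l l' by auto
  qed
  have tr: "\<forall>a b c. gen_pair C (Cod C l1) a b \<and> gen_pair C (Cod C l1) b c \<and>
        rel_mem C l1 r2 a b \<and> rel_mem C l1 r2 b c \<longrightarrow> rel_mem C l1 r2 a c"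
  proof (intro allI impI)
    fix a b c assume h: "gen_pair C (Cod C l1) a b \<and> gen_pair C (Cod C l1) b c \<and>
        rel_mem C l1 r2 a b \<and> rel_mem C l1 r2 b c"
    hence g: "Dom C a = Dom C b" "Dom C b = Dom C c" unfolding gen_pair_def by auto
    obtain la where la: "arr la" "Cod C la = Dom C l1" "l1 \<cdot> la = a" "r2 \<cdot> la = b"
      using h unfolding rel_mem_def by auto
    obtain lb where lb: "arr lb" "Cod C lb = Dom C l1" "l1 \<cdot> lb = b" "r2 \<cdot> lb = c"
      using h unfolding rel_mem_def by auto
    have dd: "Dom C lb = Dom C la"
    proof -
      have "Dom C lb = Dom C (l1 \<cdot> lb)" using lb(1,2) by simp
      also have "\<dots> = Dom C (r2 \<cdot> la)" using la(4) lb(3) by simp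
      also have "\<dots> = Dom C la" using la(1,2) by simp
      finally show ?thesis .
    qed
    have v1: "v \<cdot> (y \<cdot> (\<phi> \<cdot> (n1 \<cdot> a))) = v \<cdot> (y \<cdot> (\<phi> \<cdot> (n1 \<cdot> b)))"
    proof -
      have "v \<cdot> (y \<cdot> (\<phi> \<cdot> (n1 \<cdot> (l1 \<cdot> la)))) = v \<cdot> (y \<cdot> (\<phi> \<cdot> (n1 \<cdot> (r2 \<cdot> la))))"
        using VYF[of "l2 \<cdot> la"] la(1,2) by simp
      thus ?thesis by (simp only: la(3,4))
    qed
    have v2: "v \<cdot> (y \<cdot> (\<phi> \<cdot> (n1 \<cdot> b))) = v \<cdot> (y \<cdot> (\<phi> \<cdot> (n1 \<cdot> c)))"
    proof -
      have "v \<cdot> (y \<cdot> (\<phi> \<cdot> (n1 \<cdot> (l1 \<cdot> lb)))) = v \<cdot> (y \<cdot> (\<phi> \<cdot> (n1 \<cdot> (r2 \<cdot> lb))))"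
        using VYF[of "l2 \<cdot> lb"] lb(1,2) by simp
      thus ?thesis by (simp only: lb(3,4))
    qed
    have da: "Dom C a = Dom C la"
    proof -
      have "Dom C a = Dom C (l1 \<cdot> la)" using la(3) by simp
      thus ?thesis using la(1,2) by simp
    qed
    have ac: "arr a" "arr c" "Cod C a = Dom C n1" "Cod C c = Dom C n1" "Dom C c = Dom C la" "Dom C a = Dom C la"
      using la lb dd da by auto
    obtain d where d: "arr d" "Dom C d = Dom C (n1 \<cdot> a)" "Cod C d = Dom C f1"
        "f1 \<cdot> d = n1 \<cdot> a" "f2 \<cdot> d = n1 \<cdot> c"
      by (rule mkF[of "n1 \<cdot> a" "n1 \<cdot> c"]) (use ac la v1 v2 in simp_all)
    obtain lc where lc: "arr lc" "Dom C lc = Dom C a" "Cod C lc = Dom C l1" "l1 \<cdot> lc = a" "l2 \<cdot> lc = d"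
      by (rule mkL[of a d]) (use ac la d in simp_all)
    have fl: "n1 \<cdot> c = f2 \<cdot> (l2 \<cdot> lb)"
    proof -
      have "f2 \<cdot> (l2 \<cdot> lb) = n1 \<cdot> (r2 \<cdot> lb)" using lb(1,2) by simp
      thus ?thesis using lb(4) by simp
    qed
    have Tc: "T \<cdot> lc = T \<cdot> lb"
      by (rule lam_trans[OF la(1,2) lb(1,2) lc(1,3)]) (use la lb lc d dd ac fl in simp_all)
    have "r2 \<cdot> lc = c"
    proof (rule N_uniq)
      show "n1 \<cdot> (r2 \<cdot> lc) = n1 \<cdot> c" using lc d by simp
      show "n2 \<cdot> (r2 \<cdot> lc) = n2 \<cdot> c"
      proof -
        have "n2 \<cdot> (r2 \<cdot> lc) = T \<cdot> lb" using lc Tc by simp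
        also have "\<dots> = n2 \<cdot> (r2 \<cdot> lb)" using lb(1,2) by simp
        finally show ?thesis using lb(4) by simp
      qed
    qed (use lc ac la in simp_all)
    thus "rel_mem C l1 r2 a c" unfolding rel_mem_def using lc by auto
  qed
  show ?thesis unfolding equiv_rel_def
    by (intro conjI Lf(1) Tf(4) jm rf sy tr) simp_all
qed

end

context PSL begin

lemma pb2: "is_pullback C f2 n1 l2 r2"
proof -
  have U: "\<forall>h\<in>Arr C. \<forall>k\<in>Arr C. Cod C h = Dom C f2 \<and> Cod C k = Dom C n1 \<and> Dom C h = Dom C k \<and>
      f2 \<cdot> h = n1 \<cdot> k \<longrightarrow> (\<exists>!t. t \<in> hom C (Dom C h) (Dom C l2) \<and> l2 \<cdot> t = h \<and> r2 \<cdot> t = k)"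
  proof (intro ballI impI)
    fix h k assume hA: "arr h" and kA: "arr k" and hk: "Cod C h = Dom C f2 \<and> Cod C k = Dom C n1 \<and> Dom C h = Dom C k \<and>
      f2 \<cdot> h = n1 \<cdot> k"
    hence h: "Cod C h = Dom C f1" "Cod C k = Dom C n1" "Dom C h = Dom C k" "f2 \<cdot> h = n1 \<cdot> k" by auto
    obtain d where d: "arr d" "Dom C d = Dom C (f2 \<cdot> h)" "Cod C d = Dom C f1"
        "f1 \<cdot> d = f2 \<cdot> h" "f2 \<cdot> d = f1 \<cdot> h"
      by (rule mkF[of "f2 \<cdot> h" "f1 \<cdot> h"]) (use hA h(1) VYF[of h] in simp_all)
    have dd: "Dom C d = Dom C h" using d hA kA h by simp
    obtain l0 where l0: "arr l0" "Dom C l0 = Dom C k" "Cod C l0 = Dom C l1" "l1 \<cdot> l0 = k" "l2 \<cdot> l0 = d"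
      by (rule mkL[of k d]) (use kA h d dd in simp_all)
    have f1h: "f1 \<cdot> h = n1 \<cdot> (r2 \<cdot> l0)"
    proof -
      have "n1 \<cdot> (r2 \<cdot> l0) = f2 \<cdot> (l2 \<cdot> l0)" using l0(1,3) by simp
      thus ?thesis using l0(5) d(5) by simp
    qed
    have rl: "arr (r2 \<cdot> l0)" "Cod C (r2 \<cdot> l0) = Dom C n1" "Dom C (r2 \<cdot> l0) = Dom C h" using l0 h by simp_all
    obtain t0 where t0: "arr t0" "Dom C t0 = Dom C (r2 \<cdot> l0)" "Cod C t0 = Dom C l1" "l1 \<cdot> t0 = r2 \<cdot> l0" "l2 \<cdot> t0 = h"
      by (rule mkL[of "r2 \<cdot> l0" h]) (use rl hA h f1h in simp_all)
    have Tt0: "T \<cdot> t0 = n2 \<cdot> (l1 \<cdot> l0)"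
      by (rule lam_inv[OF l0(1,3) t0(1,3)]) (use t0 l0 d rl h in simp_all)
    have rt0: "r2 \<cdot> t0 = k"
    proof (rule N_uniq)
      show "n1 \<cdot> (r2 \<cdot> t0) = n1 \<cdot> k" using t0 h by simp
      show "n2 \<cdot> (r2 \<cdot> t0) = n2 \<cdot> k" using t0(1,3) Tt0 l0(4) by simp
    qed (use t0 rl kA h in simp_all)
    have uniq: "t = t0" if t: "t \<in> hom C (Dom C h) (Dom C l2)" "l2 \<cdot> t = h" "r2 \<cdot> t = k" for t
    proof -
      have ta: "arr t" "Dom C t = Dom C h" "Cod C t = Dom C l1" using t unfolding hom_def by auto
      have Tt: "T \<cdot> l0 = n2 \<cdot> (l1 \<cdot> t)"
        by (rule lam_inv[OF ta(1,3) l0(1,3)]) (use t ta l0 d h in simp_all)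
      have e1: "l1 \<cdot> t = l1 \<cdot> t0"
      proof (rule N_uniq)
        show "n1 \<cdot> (l1 \<cdot> t) = n1 \<cdot> (l1 \<cdot> t0)"
        proof -
          have "n1 \<cdot> (l1 \<cdot> t) = f1 \<cdot> (l2 \<cdot> t)" using ta by simp
          also have "\<dots> = f1 \<cdot> (l2 \<cdot> t0)" using t(2) t0(5) by simp
          also have "\<dots> = n1 \<cdot> (l1 \<cdot> t0)" using t0(1,3) by simp
          finally show ?thesis .
        qed
        show "n2 \<cdot> (l1 \<cdot> t) = n2 \<cdot> (l1 \<cdot> t0)" using Tt t0(4) l0(1,3) by simp
      qed (use ta t0 rl in simp_all)
      show "t = t0" by (rule L_uniq) (use ta t0 rl e1 t(2) in simp_all)
    qed
    show "\<exists>!t. t \<in> hom C (Dom C h) (Dom C l2) \<and> l2 \<cdot> t = h \<and> r2 \<cdot> t = k"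
    proof (rule ex1I[of _ t0])
      show "t0 \<in> hom C (Dom C h) (Dom C l2) \<and> l2 \<cdot> t0 = h \<and> r2 \<cdot> t0 = k"
        using t0 rl rt0 unfolding hom_def by simp
    qed (use uniq in blast)
  qed
  show ?thesis unfolding is_pullback_def
    by (intro conjI U) (simp_all add: r2(4))
qed

lemma lam_df: "discrete_fibration C l1 r2 f1 f2 n1 l2"
  unfolding discrete_fibration_def
  by (intro conjI L pb2) (simp_all add: hom_def r2(4) pb_D[OF L])

end

context PSL begin

lemma Pid: "arr P" "Dom C P = P" "Cod C P = P"
  using ar(2) dc(3) arr_dom[of x] dom_dom[of x] cod_dom[of x] by simp_all

lemma idl: "arr a \<Longrightarrow> Cod C a = P \<Longrightarrow> P \<cdot> a = a"
  using id_left[of a] by simp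

lemma key: assumes a: "arr a1" "arr a2" "Cod C a1 = X" "Cod C a2 = X" "Dom C a1 = Dom C a2"
    and h: "f \<cdot> a1 = f \<cdot> a2" "u \<cdot> a1 = u \<cdot> a2"
  shows "a1 = a2"
proof -
  define \<psi> where "\<psi> = v \<cdot> (y \<cdot> \<phi>)"
  have \<psi>: "arr \<psi>" "Dom C \<psi> = P" "Cod C \<psi> = V" "\<psi> \<cdot> f1 = \<psi> \<cdot> f2" unfolding \<psi>_def using pb_D[OF F] by simp_all
  obtain c where cq: "coequalizer C f1 f2 c" using kp_coeq[OF F] by blast
  note DC = coeq_D[OF cq]
  have DC': "Dom C c = P" using DC by simp
  have rc: "regular_epi C c" unfolding regular_epi_def using DC cq by blast
  obtain mm where mm: "arr mm" "Dom C mm = Cod C c" "Cod C mm = Cod C \<psi>" "mm \<cdot> c = \<psi>"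
    by (rule coeq_ex[OF cq \<psi>(1)]) (use \<psi> in simp_all)
  have kc: "kernel_pair C f1 f2 c"
  proof -
    have U: "\<forall>h\<in>Arr C. \<forall>k\<in>Arr C. Cod C h = Dom C c \<and> Cod C k = Dom C c \<and> Dom C h = Dom C k \<and>
      c \<cdot> h = c \<cdot> k \<longrightarrow> (\<exists>!t. t \<in> hom C (Dom C h) (Dom C f1) \<and> f1 \<cdot> t = h \<and> f2 \<cdot> t = k)"
    proof (intro ballI impI)
      fix h k assume hA: "arr h" and kA: "arr k" and hk: "Cod C h = Dom C c \<and> Cod C k = Dom C c \<and> Dom C h = Dom C k \<and>
        c \<cdot> h = c \<cdot> k"
      have hk': "Cod C h = P" "Cod C k = P" "Dom C h = Dom C k" "c \<cdot> h = c \<cdot> k" using hk DC' by auto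
      have "\<psi> \<cdot> h = (mm \<cdot> c) \<cdot> h" using mm by simp
      also have "\<dots> = mm \<cdot> (c \<cdot> h)" by (rule assoc) (use mm DC DC' hA hk' in simp_all)
      also have "\<dots> = mm \<cdot> (c \<cdot> k)" using hk' by simp
      also have "\<dots> = (mm \<cdot> c) \<cdot> k" by (rule assoc[symmetric]) (use mm DC DC' kA hk' in simp_all)
      also have "\<dots> = \<psi> \<cdot> k" using mm by simp
      finally have pe: "\<psi> \<cdot> h = \<psi> \<cdot> k" .
      show "\<exists>!t. t \<in> hom C (Dom C h) (Dom C f1) \<and> f1 \<cdot> t = h \<and> f2 \<cdot> t = k"
        by (rule pb_univ[OF F]) (use hA kA hk' pe \<psi> in \<open>simp_all add: \<psi>_def\<close>)
    qed
    show ?thesis unfolding kernel_pair_def is_pullback_def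
      by (intro conjI U) (use DC DC' in simp_all)
  qed
  have AE: "\<forall>f k1 k2 r1 r2 g h.
        regular_epi C f \<and> kernel_pair C k1 k2 f \<and> equiv_rel C r1 r2 \<and>
        discrete_fibration C r1 r2 k1 k2 g h \<longrightarrow> effective C r1 r2"
    using ae unfolding almost_exact_def by (elim conjE)
  have "effective C l1 r2" using rc kc lam_equiv lam_df by (intro AE[rule_format] conjI) assumption+
  then obtain H where HP: "is_pullback C H H l1 r2" unfolding effective_def kernel_pair_def by blast
  note DH = pb_D[OF HP]
  have DH': "Dom C H = Dom C n1" using DH by simp
  have Hl: "H \<cdot> (l1 \<cdot> l) = H \<cdot> (r2 \<cdot> l)" if "arr l" "Cod C l = Dom C l1" for l
    by (rule pb_comm[OF HP]) (use that in simp_all)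
  obtain i0 where i0: "arr i0" "Dom C i0 = P" "Cod C i0 = Dom C n1" "n1 \<cdot> i0 = P" "n2 \<cdot> i0 = x"
  proof -
    have xP: "x \<cdot> P = x" using id_right[of x] by simp
    obtain i where "arr i" "Dom C i = Dom C P" "Cod C i = Dom C n1" "n1 \<cdot> i = P" "n2 \<cdot> i = x"
      by (rule mkN[of P x]) (use Pid xP in simp_all)
    thus ?thesis using that Pid by simp
  qed
  have i0e: "n1 \<cdot> (i0 \<cdot> a) = a" "n2 \<cdot> (i0 \<cdot> a) = x \<cdot> a" if "arr a" "Cod C a = P" for a
  proof -
    have "n1 \<cdot> (i0 \<cdot> a) = P \<cdot> a" by (rule assoc_eq[OF i0(4)]) (use i0 that in simp_all)
    thus "n1 \<cdot> (i0 \<cdot> a) = a" using idl[OF that] by simp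
    show "n2 \<cdot> (i0 \<cdot> a) = x \<cdot> a" by (rule assoc_eq[OF i0(5)]) (use i0 that in simp_all)
  qed
  \<comment> \<open>H i0 coequalizes K and S\<close>
  have HK: "H \<cdot> (i0 \<cdot> \<alpha>) = H \<cdot> (i0 \<cdot> \<beta>)"
    if ab: "arr \<alpha>" "arr \<beta>" "Cod C \<alpha> = P" "Cod C \<beta> = P" "Dom C \<alpha> = Dom C \<beta>"
       and s: "arr s" "Cod C s = P" "Dom C s = Dom C \<alpha>"
       "u \<cdot> (x \<cdot> s) = u \<cdot> (x \<cdot> \<beta>)" "\<phi> \<cdot> s = \<phi> \<cdot> \<alpha>" "x \<cdot> s = x \<cdot> \<beta>"
       and vv: "v \<cdot> (y \<cdot> (\<phi> \<cdot> \<alpha>)) = v \<cdot> (y \<cdot> (\<phi> \<cdot> \<beta>))"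
     for \<alpha> \<beta> s
  proof -
    obtain d where d: "arr d" "Dom C d = Dom C \<alpha>" "Cod C d = Dom C f1" "f1 \<cdot> d = \<alpha>" "f2 \<cdot> d = \<beta>"
      by (rule mkF[OF ab vv])
    have ia: "arr (i0 \<cdot> \<alpha>)" "Cod C (i0 \<cdot> \<alpha>) = Dom C n1" "Dom C (i0 \<cdot> \<alpha>) = Dom C \<alpha>" using i0 ab by simp_all
    have ib: "arr (i0 \<cdot> \<beta>)" "Cod C (i0 \<cdot> \<beta>) = Dom C n1" "Dom C (i0 \<cdot> \<beta>) = Dom C \<alpha>" using i0 ab by simp_all
    obtain l where l: "arr l" "Dom C l = Dom C (i0 \<cdot> \<alpha>)" "Cod C l = Dom C l1" "l1 \<cdot> l = i0 \<cdot> \<alpha>" "l2 \<cdot> l = d"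
      by (rule mkL[OF ia(1) d(1) ia(2) d(3)]) (use ia d i0e[OF ab(1,3)] in simp_all)
    have Tl: "T \<cdot> l = x \<cdot> s"
    proof (rule Tform[OF l(1,3) ab(1,3)])
      show "x \<cdot> \<alpha> = n2 \<cdot> (l1 \<cdot> l)" using l(4) i0e[OF ab(1,3)] by simp
      show "u \<cdot> (x \<cdot> s) = u \<cdot> (x \<cdot> (f2 \<cdot> (l2 \<cdot> l)))" using l(5) d(5) s(4) by simp
    qed (use l ia s in simp_all)
    have "r2 \<cdot> l = i0 \<cdot> \<beta>"
    proof (rule N_uniq)
      show "n1 \<cdot> (r2 \<cdot> l) = n1 \<cdot> (i0 \<cdot> \<beta>)" using l(1,3,5) d(5) i0e[OF ab(2,4)] by simp
      show "n2 \<cdot> (r2 \<cdot> l) = n2 \<cdot> (i0 \<cdot> \<beta>)" using l(1,3) Tl s(6) i0e[OF ab(2,4)] by simp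
    qed (use l ia ib in simp_all)
    thus ?thesis using Hl[OF l(1,3)] l(4) by simp
  qed
  have Hx: "(H \<cdot> i0) \<cdot> \<alpha> = (H \<cdot> i0) \<cdot> \<beta>" if ab: "arr \<alpha>" "arr \<beta>" "Cod C \<alpha> = P" "Cod C \<beta> = P"
      "Dom C \<alpha> = Dom C \<beta>" "x \<cdot> \<alpha> = x \<cdot> \<beta>" for \<alpha> \<beta>
  proof -
    have vv: "v \<cdot> (y \<cdot> (\<phi> \<cdot> \<alpha>)) = v \<cdot> (y \<cdot> (\<phi> \<cdot> \<beta>))"
    proof -
      have "v \<cdot> (f \<cdot> (x \<cdot> \<alpha>)) = v \<cdot> (f \<cdot> (x \<cdot> \<beta>))" using ab(6) by simp
      thus ?thesis using ab(1-4) by simp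
    qed
    have "H \<cdot> (i0 \<cdot> \<alpha>) = H \<cdot> (i0 \<cdot> \<beta>)" by (rule HK[of \<alpha> \<beta> \<alpha>]) (use vv ab in simp_all)
    thus ?thesis using i0 DH(1) DH' ab(1-5) by simp
  qed
  have H\<phi>: "(H \<cdot> i0) \<cdot> \<alpha> = (H \<cdot> i0) \<cdot> \<beta>" if ab: "arr \<alpha>" "arr \<beta>" "Cod C \<alpha> = P" "Cod C \<beta> = P"
      "Dom C \<alpha> = Dom C \<beta>" "\<phi> \<cdot> \<alpha> = \<phi> \<cdot> \<beta>" for \<alpha> \<beta>
  proof -
    have vv: "v \<cdot> (y \<cdot> (\<phi> \<cdot> \<alpha>)) = v \<cdot> (y \<cdot> (\<phi> \<cdot> \<beta>))" using ab(6) by simp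
    have "H \<cdot> (i0 \<cdot> \<alpha>) = H \<cdot> (i0 \<cdot> \<beta>)"
      by (rule HK[of \<alpha> \<beta> \<beta>]) (use vv ab in simp_all)
    thus ?thesis using i0 DH(1) DH' ab(1-5) by simp
  qed
  have Hi: "arr (H \<cdot> i0)" "Dom C (H \<cdot> i0) = P" using i0 DH DH' by simp_all
  have "\<exists>g. arr g \<and> Dom C g = X \<and> Cod C g = Cod C (H \<cdot> i0) \<and> g \<cdot> x = H \<cdot> i0"
  proof (rule descend[OF rex Hi(1)])
    show "Dom C (H \<cdot> i0) = Dom C x" using Hi by simp
  next
    fix a b assume A: "arr a" "arr b" "Cod C a = Dom C x" "Cod C b = Dom C x" "Dom C a = Dom C b" "x \<cdot> a = x \<cdot> b"
    show "(H \<cdot> i0) \<cdot> a = (H \<cdot> i0) \<cdot> b" by (rule Hx) (use A in simp_all)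
  next
    fix t assume "arr t" "Dom C t = Cod C x" "Cod C t = Cod C (H \<cdot> i0)" "t \<cdot> x = H \<cdot> i0"
    thus "\<exists>g. arr g \<and> Dom C g = X \<and> Cod C g = Cod C (H \<cdot> i0) \<and> g \<cdot> x = H \<cdot> i0" by auto
  qed
  then obtain g where g: "arr g" "Dom C g = X" "Cod C g = Cod C (H \<cdot> i0)" "g \<cdot> x = H \<cdot> i0" by blast
  have "\<exists>g'. arr g' \<and> Dom C g' = Z \<and> Cod C g' = Cod C (H \<cdot> i0) \<and> g' \<cdot> \<phi> = H \<cdot> i0"
  proof (rule descend[OF re\<phi> Hi(1)])
    show "Dom C (H \<cdot> i0) = Dom C \<phi>" using Hi by simp
  next
    fix a b assume A: "arr a" "arr b" "Cod C a = Dom C \<phi>" "Cod C b = Dom C \<phi>" "Dom C a = Dom C b" "\<phi> \<cdot> a = \<phi> \<cdot> b"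
    show "(H \<cdot> i0) \<cdot> a = (H \<cdot> i0) \<cdot> b" by (rule H\<phi>) (use A in simp_all)
  next
    fix t assume "arr t" "Dom C t = Cod C \<phi>" "Cod C t = Cod C (H \<cdot> i0)" "t \<cdot> \<phi> = H \<cdot> i0"
    thus "\<exists>g'. arr g' \<and> Dom C g' = Z \<and> Cod C g' = Cod C (H \<cdot> i0) \<and> g' \<cdot> \<phi> = H \<cdot> i0" by auto
  qed
  then obtain g' where g': "arr g'" "Dom C g' = Z" "Cod C g' = Cod C (H \<cdot> i0)" "g' \<cdot> \<phi> = H \<cdot> i0" by blast
  obtain t0 where t0: "arr t0" "Dom C t0 = Y" "Cod C t0 = Cod C g" "t0 \<cdot> f = g"
    by (rule po_ex[OF po g(1) g'(1)]) (use g g' in simp_all)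
  have Hg: "H = g \<cdot> n2"
  proof -
    have n2a: "arr n2" "Cod C n2 = Cod C x" by simp_all
    obtain e q where e: "regular_epi C e" "arr e" "arr q" "Cod C e = Dom C n2" "Dom C q = Dom C e"
        "Cod C q = Dom C x" "x \<cdot> q = n2 \<cdot> e"
      by (rule cover[OF rex n2a])
    have e': "Cod C e = Dom C n1" "Cod C q = P" using e by simp_all
    have vv: "v \<cdot> (y \<cdot> (\<phi> \<cdot> (n1 \<cdot> e))) = v \<cdot> (y \<cdot> (\<phi> \<cdot> q))"
    proof -
      have "v \<cdot> (y \<cdot> (\<phi> \<cdot> q)) = w \<cdot> (u \<cdot> (x \<cdot> q))" using e(3) e' by simp
      also have "\<dots> = w \<cdot> (u \<cdot> (n2 \<cdot> e))" by (simp only: e(7))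
      also have "\<dots> = w \<cdot> (u \<cdot> (x \<cdot> (n1 \<cdot> e)))" by (simp only: Ncomm[OF e(2) e'(1)])
      also have "\<dots> = v \<cdot> (y \<cdot> (\<phi> \<cdot> (n1 \<cdot> e)))" using e(2) e' by simp
      finally show ?thesis by simp
    qed
    obtain d where d: "arr d" "Dom C d = Dom C (n1 \<cdot> e)" "Cod C d = Dom C f1" "f1 \<cdot> d = n1 \<cdot> e" "f2 \<cdot> d = q"
      by (rule mkF[of "n1 \<cdot> e" q]) (use e e' vv in simp_all)
    obtain l where l: "arr l" "Dom C l = Dom C e" "Cod C l = Dom C l1" "l1 \<cdot> l = e" "l2 \<cdot> l = d"
      by (rule mkL[of e d]) (use e e' d in simp_all)
    have Tl: "T \<cdot> l = x \<cdot> q"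
      by (rule Tform[OF l(1,3) e(3) e'(2)]) (use l d e e' in simp_all)
    have iq: "arr (i0 \<cdot> q)" "Cod C (i0 \<cdot> q) = Dom C n1" using i0 e e' by simp_all
    have rl: "r2 \<cdot> l = i0 \<cdot> q"
    proof (rule N_uniq)
      show "n1 \<cdot> (r2 \<cdot> l) = n1 \<cdot> (i0 \<cdot> q)" using l(1,3,5) d(5) i0e[OF e(3) e'(2)] by simp
      show "n2 \<cdot> (r2 \<cdot> l) = n2 \<cdot> (i0 \<cdot> q)" using l(1,3) Tl i0e[OF e(3) e'(2)] by simp
    qed (use l iq i0 e e' in simp_all)
    have "H \<cdot> e = H \<cdot> (i0 \<cdot> q)" using Hl[OF l(1,3)] l(4) rl by simp
    also have "\<dots> = (H \<cdot> i0) \<cdot> q" using i0 DH(1) DH' e e' by simp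
    also have "\<dots> = (g \<cdot> x) \<cdot> q" using g(4) by simp
    also have "\<dots> = g \<cdot> (n2 \<cdot> e)" using g(1,2) e e' by simp
    also have "\<dots> = (g \<cdot> n2) \<cdot> e" using g(1,2) e e' by simp
    finally have he: "H \<cdot> e = (g \<cdot> n2) \<cdot> e" .
    have cHi: "Cod C (H \<cdot> i0) = Cod C H" using i0(1,3) DH(1) DH' by simp
    show ?thesis by (rule epi[OF e(1) _ _ _ _ _ he]) (use DH(1) DH' g(1,2,3) cHi e(2) e' in simp_all)
  qed
  have a1a: "arr a1" "Cod C a1 = Cod C x" using a by simp_all
  obtain e q where e: "regular_epi C e" "arr e" "arr q" "Cod C e = Dom C a1" "Dom C q = Dom C e"
        "Cod C q = Dom C x" "x \<cdot> q = a1 \<cdot> e"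
    by (rule cover[OF rex a1a])
  have e': "Cod C q = P" using e by simp
  have ua: "u \<cdot> (a2 \<cdot> e) = u \<cdot> (x \<cdot> q)"
  proof -
    have "u \<cdot> (a2 \<cdot> e) = (u \<cdot> a2) \<cdot> e" using a e by simp
    also have "\<dots> = (u \<cdot> a1) \<cdot> e" using h(2) by simp
    also have "\<dots> = u \<cdot> (x \<cdot> q)" using a e e' by simp
    finally show ?thesis .
  qed
  obtain n' where n': "arr n'" "Dom C n' = Dom C q" "Cod C n' = Dom C n1" "n1 \<cdot> n' = q" "n2 \<cdot> n' = a2 \<cdot> e"
    by (rule mkN[of q "a2 \<cdot> e"]) (use a e e' ua in simp_all)
  have iq: "arr (i0 \<cdot> q)" "Cod C (i0 \<cdot> q) = Dom C n1" "Dom C (i0 \<cdot> q) = Dom C q" using i0 e e' by simp_all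
  have ga: "g \<cdot> a1 = g \<cdot> a2"
  proof -
    have "g \<cdot> a1 = t0 \<cdot> (f \<cdot> a1)" by (rule assoc_eq[OF t0(4), symmetric]) (use t0 a in simp_all)
    also have "\<dots> = t0 \<cdot> (f \<cdot> a2)" using h(1) by simp
    also have "\<dots> = g \<cdot> a2" by (rule assoc_eq[OF t0(4)]) (use t0 a in simp_all)
    finally show ?thesis .
  qed
  have HH: "H \<cdot> (i0 \<cdot> q) = H \<cdot> n'"
  proof -
    have "H \<cdot> (i0 \<cdot> q) = g \<cdot> (n2 \<cdot> (i0 \<cdot> q))" unfolding Hg by (rule assoc) (use g iq in simp_all)
    also have "\<dots> = g \<cdot> (a1 \<cdot> e)" using i0e[OF e(3) e'] e(7) by simp
    also have "\<dots> = (g \<cdot> a1) \<cdot> e" using g a e by simp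
    also have "\<dots> = (g \<cdot> a2) \<cdot> e" using ga by simp
    also have "\<dots> = g \<cdot> (n2 \<cdot> n')" using g a e n' by simp
    also have "\<dots> = H \<cdot> n'" unfolding Hg by (rule assoc[symmetric]) (use g n' in simp_all)
    finally show ?thesis .
  qed
  obtain l where l: "arr l" "Dom C l = Dom C (i0 \<cdot> q)" "Cod C l = Dom C l1" "l1 \<cdot> l = i0 \<cdot> q" "r2 \<cdot> l = n'"
    by (rule pb_ex[OF HP iq(1) n'(1)]) (use iq n' HH DH(1) DH' in simp_all)
  have "T \<cdot> l = x \<cdot> q"
  proof (rule Tform[OF l(1,3) e(3) e'])
    show "x \<cdot> q = n2 \<cdot> (l1 \<cdot> l)" using l(4) i0e[OF e(3) e'] by simp
    have "f2 \<cdot> (l2 \<cdot> l) = n1 \<cdot> (r2 \<cdot> l)" using l(1,3) by simp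
    hence "f2 \<cdot> (l2 \<cdot> l) = q" using l(5) n'(4) by simp
    thus "u \<cdot> (x \<cdot> q) = u \<cdot> (x \<cdot> (f2 \<cdot> (l2 \<cdot> l)))" by simp
  qed (use l iq e e' in simp_all)
  moreover have "T \<cdot> l = a2 \<cdot> e"
  proof -
    have "T \<cdot> l = n2 \<cdot> (r2 \<cdot> l)" using l(1,3) by simp
    thus ?thesis using l(5) n'(5) by simp
  qed
  ultimately have "a1 \<cdot> e = a2 \<cdot> e" using e(7) by simp
  thus ?thesis by (rule epi[OF e(1), rotated -1]) (use a e in simp_all)
qed

end

context PS begin

lemma jmPS: assumes a: "arr a1" "arr a2" "Cod C a1 = X" "Cod C a2 = X" "Dom C a1 = Dom C a2"
    and h: "f \<cdot> a1 = f \<cdot> a2" "u \<cdot> a1 = u \<cdot> a2"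
  shows "a1 = a2"
proof -
  have uxA: "arr (u \<cdot> x)" "Cod C (u \<cdot> x) = U" "Dom C (u \<cdot> x) = P" by simp_all
  obtain n2 n1 where N: "is_pullback C u (u \<cdot> x) n2 n1" using pb_exists[of u "u \<cdot> x"] uxA by auto
  have psi: "arr (v \<cdot> (y \<cdot> \<phi>))" by simp
  obtain f1 f2 where F: "is_pullback C (v \<cdot> (y \<cdot> \<phi>)) (v \<cdot> (y \<cdot> \<phi>)) f1 f2"
    using pb_exists[OF psi psi] by auto
  note DN = pb_D[OF N] and DF = pb_D[OF F]
  have DN': "arr n1" "arr n2" "Cod C n1 = P" "Cod C n2 = X" "Dom C n2 = Dom C n1" using DN by simp_all
  have DF': "arr f1" "arr f2" "Cod C f1 = P" "Cod C f2 = P" "Dom C f2 = Dom C f1" using DF by simp_all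
  obtain l2 l1 where L: "is_pullback C f1 n1 l2 l1" using pb_exists[of f1 n1] DN' DF' by auto
  note DL = pb_D[OF L]
  have DL': "arr l1" "arr l2" "Cod C l1 = Dom C n1" "Cod C l2 = Dom C f1" "Dom C l2 = Dom C l1" using DL by simp_all
  have nl: "arr (n2 \<cdot> l1)" "Cod C (n2 \<cdot> l1) = X" using DN' DL' by simp_all
  obtain c2 c1 where CV: "is_pullback C x (n2 \<cdot> l1) c2 c1" using pb_exists[of x "n2 \<cdot> l1"] nl by auto
  have rc1: "regular_epi C c1" by (rule pb_stable[OF CV rex])
  note DC = pb_D[OF CV]
  have DC': "arr c1" "arr c2" "Cod C c1 = Dom C l1" "Cod C c2 = P" "Dom C c2 = Dom C c1" using DC DN' DL' by simp_all
  have Nc: "u \<cdot> (n2 \<cdot> t) = u \<cdot> (x \<cdot> (n1 \<cdot> t))" if "arr t" "Cod C t = Dom C n1" for t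
    using pb_comm[OF N, of t] that DN' by simp
  have Fc: "v \<cdot> (y \<cdot> (\<phi> \<cdot> (f1 \<cdot> t))) = v \<cdot> (y \<cdot> (\<phi> \<cdot> (f2 \<cdot> t)))" if "arr t" "Cod C t = Dom C f1" for t
    using pb_comm[OF F, of t] that DF' by simp
  have Lc: "f1 \<cdot> (l2 \<cdot> t) = n1 \<cdot> (l1 \<cdot> t)" if "arr t" "Cod C t = Dom C l1" for t
    using pb_comm[OF L, of t] that DL' by simp
  have Cc: "x \<cdot> (c2 \<cdot> t) = n2 \<cdot> (l1 \<cdot> (c1 \<cdot> t))" if "arr t" "Cod C t = Dom C c1" for t
    using pb_comm[OF CV, of t] that DC' DN' DL' by simp
  have ac1: "arr (l1 \<cdot> c1)" "Cod C (l1 \<cdot> c1) = Dom C n1" "arr (l2 \<cdot> c1)" "Cod C (l2 \<cdot> c1) = Dom C f1"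
    using DC' DL' by simp_all
  have vv: "v \<cdot> (y \<cdot> (\<phi> \<cdot> (f2 \<cdot> (l2 \<cdot> c1)))) = v \<cdot> (y \<cdot> (\<phi> \<cdot> c2))"
  proof -
    have "v \<cdot> (y \<cdot> (\<phi> \<cdot> (f2 \<cdot> (l2 \<cdot> c1)))) = v \<cdot> (y \<cdot> (\<phi> \<cdot> (f1 \<cdot> (l2 \<cdot> c1))))"
      using Fc[OF ac1(3,4)] by simp
    also have "\<dots> = v \<cdot> (y \<cdot> (\<phi> \<cdot> (n1 \<cdot> (l1 \<cdot> c1))))" using Lc[of c1] DC' by simp
    also have "\<dots> = w \<cdot> (u \<cdot> (x \<cdot> (n1 \<cdot> (l1 \<cdot> c1))))" using ac1 DN' by simp
    also have "\<dots> = w \<cdot> (u \<cdot> (n2 \<cdot> (l1 \<cdot> c1)))" using Nc[OF ac1(1,2)] by simp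
    also have "\<dots> = w \<cdot> (u \<cdot> (x \<cdot> c2))"
    proof -
      have xc: "x \<cdot> c2 = n2 \<cdot> (l1 \<cdot> c1)" using DC(9) DC' DN' DL' by simp
      show ?thesis by (simp only: xc)
    qed
    also have "\<dots> = v \<cdot> (y \<cdot> (\<phi> \<cdot> c2))" using DC' by simp
    finally show ?thesis .
  qed
  obtain \<sigma> where \<sigma>: "arr \<sigma>" "Dom C \<sigma> = Dom C c2" "Cod C \<sigma> = P" "u \<cdot> (x \<cdot> \<sigma>) = u \<cdot> (x \<cdot> (f2 \<cdot> (l2 \<cdot> c1)))"
      "\<phi> \<cdot> \<sigma> = \<phi> \<cdot> c2"
    by (rule transport[of "f2 \<cdot> (l2 \<cdot> c1)" c2]) (use DC' DL' DF' vv in simp_all)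
  have \<sigma>': "Dom C \<sigma> = Dom C c1" using \<sigma> DC' by simp
  have xs: "arr (x \<cdot> \<sigma>)" "Dom C (x \<cdot> \<sigma>) = Dom C c1" "Cod C (x \<cdot> \<sigma>) = X" using \<sigma> \<sigma>' by simp_all
  have "\<exists>T. arr T \<and> Dom C T = Cod C c1 \<and> Cod C T = Cod C (x \<cdot> \<sigma>) \<and> T \<cdot> c1 = x \<cdot> \<sigma>"
  proof (rule descend[OF rc1 xs(1)])
    show "Dom C (x \<cdot> \<sigma>) = Dom C c1" by (rule xs(2))
  next
    fix a b assume A: "arr a" "arr b" "Cod C a = Dom C c1" "Cod C b = Dom C c1" "Dom C a = Dom C b" "c1 \<cdot> a = c1 \<cdot> b"
    have sa: "x \<cdot> (\<sigma> \<cdot> a) = x \<cdot> (\<sigma> \<cdot> b)"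
    proof (rule shift[of "c2 \<cdot> a" "c2 \<cdot> b" "\<sigma> \<cdot> a" "\<sigma> \<cdot> b"])
      show "x \<cdot> (c2 \<cdot> a) = x \<cdot> (c2 \<cdot> b)" using Cc[OF A(1,3)] Cc[OF A(2,4)] A(6) by simp
      show "\<phi> \<cdot> (\<sigma> \<cdot> a) = \<phi> \<cdot> (c2 \<cdot> a)" using assoc_eq[OF \<sigma>(5), of a] \<sigma> \<sigma>' A DC' by simp
      show "\<phi> \<cdot> (\<sigma> \<cdot> b) = \<phi> \<cdot> (c2 \<cdot> b)" using assoc_eq[OF \<sigma>(5), of b] \<sigma> \<sigma>' A DC' by simp
      have "u \<cdot> (x \<cdot> (\<sigma> \<cdot> a)) = (u \<cdot> (x \<cdot> \<sigma>)) \<cdot> a" using \<sigma>(1,3) \<sigma>' A(1-5) DC' by simp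
      also have "\<dots> = (u \<cdot> (x \<cdot> (f2 \<cdot> (l2 \<cdot> c1)))) \<cdot> a" using \<sigma>(4) by simp
      also have "\<dots> = u \<cdot> (x \<cdot> (f2 \<cdot> (l2 \<cdot> (c1 \<cdot> a))))" using A DC' DL' DF' by simp
      also have "\<dots> = u \<cdot> (x \<cdot> (f2 \<cdot> (l2 \<cdot> (c1 \<cdot> b))))" using A(6) by simp
      also have "\<dots> = (u \<cdot> (x \<cdot> (f2 \<cdot> (l2 \<cdot> c1)))) \<cdot> b" using A DC' DL' DF' by simp
      also have "\<dots> = (u \<cdot> (x \<cdot> \<sigma>)) \<cdot> b" using \<sigma>(4) by simp
      also have "\<dots> = u \<cdot> (x \<cdot> (\<sigma> \<cdot> b))" using \<sigma>(1,3) \<sigma>' A(1-5) DC' by simp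
      finally show "u \<cdot> (x \<cdot> (\<sigma> \<cdot> a)) = u \<cdot> (x \<cdot> (\<sigma> \<cdot> b))" .
    qed (use A DC' \<sigma> \<sigma>' in simp_all)
    show "(x \<cdot> \<sigma>) \<cdot> a = (x \<cdot> \<sigma>) \<cdot> b" using sa \<sigma> \<sigma>' A by simp
  next
    fix t assume "arr t" "Dom C t = Cod C c1" "Cod C t = Cod C (x \<cdot> \<sigma>)" "t \<cdot> c1 = x \<cdot> \<sigma>"
    thus "\<exists>T. arr T \<and> Dom C T = Cod C c1 \<and> Cod C T = Cod C (x \<cdot> \<sigma>) \<and> T \<cdot> c1 = x \<cdot> \<sigma>" by blast
  qed
  then obtain T where T: "arr T" "Dom C T = Cod C c1" "Cod C T = Cod C (x \<cdot> \<sigma>)" "T \<cdot> c1 = x \<cdot> \<sigma>" by blast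
  have T': "Dom C T = Dom C l1" "Cod C T = X" using T DC' xs by simp_all
  have f2l2: "arr (f2 \<cdot> l2)" "Cod C (f2 \<cdot> l2) = P" "Dom C (f2 \<cdot> l2) = Dom C l1" using DF' DL' by simp_all
  have uT: "u \<cdot> T = (u \<cdot> x) \<cdot> (f2 \<cdot> l2)"
  proof (rule epi[OF rc1])
    have "(u \<cdot> T) \<cdot> c1 = u \<cdot> (T \<cdot> c1)" using T T' DC' by simp
    also have "\<dots> = u \<cdot> (x \<cdot> \<sigma>)" using T(4) by simp
    also have "\<dots> = u \<cdot> (x \<cdot> (f2 \<cdot> (l2 \<cdot> c1)))" by (rule \<sigma>(4))
    also have "\<dots> = ((u \<cdot> x) \<cdot> (f2 \<cdot> l2)) \<cdot> c1" using DC' DL' DF' by simp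
    finally show "(u \<cdot> T) \<cdot> c1 = ((u \<cdot> x) \<cdot> (f2 \<cdot> l2)) \<cdot> c1" .
  qed (use T T' DC' f2l2 in simp_all)
  obtain r2 where r2: "arr r2" "Dom C r2 = Dom C T" "Cod C r2 = Dom C n2" "n2 \<cdot> r2 = T" "n1 \<cdot> r2 = f2 \<cdot> l2"
    using pb_ex[OF N T(1) f2l2(1) _ _ _ uT] T' f2l2 by auto
  have r2': "Dom C r2 = Dom C l1" "Cod C r2 = Dom C n1" using r2 T' DN' by simp_all
  interpret LL: PSL C \<phi> x f y u v w P Z X Y U V n1 n2 f1 f2 l1 l2 c1 c2 \<sigma> T r2
  proof (unfold_locales)
    show "is_pullback C u (u \<cdot> x) n2 n1" by (rule N)
    show "is_pullback C (v \<cdot> (y \<cdot> \<phi>)) (v \<cdot> (y \<cdot> \<phi>)) f1 f2" by (rule F)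
    show "is_pullback C f1 n1 l2 l1" by (rule L)
    show "is_pullback C x (n2 \<cdot> l1) c2 c1" by (rule CV)
    show "regular_epi C c1" by (rule rc1)
  qed (use \<sigma> \<sigma>' T T' r2 r2' in simp_all)
  show ?thesis by (rule LL.key[OF a h])
qed

lemma final: "is_pullback C f y x \<phi> \<and> is_pullback C w v u f"
proof
  have U1: "\<forall>h\<in>Arr C. \<forall>k\<in>Arr C. Cod C h = Dom C f \<and> Cod C k = Dom C y \<and> Dom C h = Dom C k \<and>
      f \<cdot> h = y \<cdot> k \<longrightarrow> (\<exists>!t. t \<in> hom C (Dom C h) (Dom C x) \<and> x \<cdot> t = h \<and> \<phi> \<cdot> t = k)"
  proof (intro ballI impI)
    fix h k assume hA: "arr h" and kA: "arr k" and hk0: "Cod C h = Dom C f \<and> Cod C k = Dom C y \<and> Dom C h = Dom C k \<and> f \<cdot> h = y \<cdot> k"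
    hence hk: "Cod C h = X" "Cod C k = Z" "Dom C h = Dom C k" "f \<cdot> h = y \<cdot> k" by auto
    have e: "w \<cdot> (u \<cdot> h) = v \<cdot> (y \<cdot> k)"
    proof -
      have "w \<cdot> (u \<cdot> h) = v \<cdot> (f \<cdot> h)" using hA hk by simp
      thus ?thesis using hk(4) by simp
    qed
    obtain t where t: "arr t" "Dom C t = Dom C (u \<cdot> h)" "Cod C t = P" "u \<cdot> (x \<cdot> t) = u \<cdot> h" "\<phi> \<cdot> t = k"
      by (rule opair[of "u \<cdot> h" k]) (use hA kA hk e in simp_all)
    have t': "Dom C t = Dom C h" using t hA hk by simp
    have xt: "x \<cdot> t = h"
    proof (rule jmPS)
      have "f \<cdot> (x \<cdot> t) = y \<cdot> (\<phi> \<cdot> t)" using t by simp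
      thus "f \<cdot> (x \<cdot> t) = f \<cdot> h" using t(5) hk(4) by simp
    qed (use t t' hA hk in simp_all)
    show "\<exists>!t. t \<in> hom C (Dom C h) (Dom C x) \<and> x \<cdot> t = h \<and> \<phi> \<cdot> t = k"
    proof (rule ex1I[of _ t])
      show "t \<in> hom C (Dom C h) (Dom C x) \<and> x \<cdot> t = h \<and> \<phi> \<cdot> t = k" using t t' xt unfolding hom_def by simp
    next
      fix t2 assume t2: "t2 \<in> hom C (Dom C h) (Dom C x) \<and> x \<cdot> t2 = h \<and> \<phi> \<cdot> t2 = k"
      show "t2 = t" by (rule ouniq) (use t2 t t' xt in \<open>simp_all add: hom_def\<close>)
    qed
  qed
  show "is_pullback C f y x \<phi>" unfolding is_pullback_def by (intro conjI U1) (simp_all add: sq1)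
  have U2: "\<forall>h\<in>Arr C. \<forall>k\<in>Arr C. Cod C h = Dom C w \<and> Cod C k = Dom C v \<and> Dom C h = Dom C k \<and>
      w \<cdot> h = v \<cdot> k \<longrightarrow> (\<exists>!t. t \<in> hom C (Dom C h) (Dom C u) \<and> u \<cdot> t = h \<and> f \<cdot> t = k)"
  proof (intro ballI impI)
    fix h k assume hA: "arr h" and kA: "arr k" and hk0: "Cod C h = Dom C w \<and> Cod C k = Dom C v \<and> Dom C h = Dom C k \<and> w \<cdot> h = v \<cdot> k"
    hence hk: "Cod C h = U" "Cod C k = Y" "Dom C h = Dom C k" "w \<cdot> h = v \<cdot> k" by auto
    have ka: "arr k" "Cod C k = Cod C y" using kA hk by simp_all
    obtain e k' where e: "regular_epi C e" "arr e" "arr k'" "Cod C e = Dom C k" "Dom C k' = Dom C e"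
        "Cod C k' = Dom C y" "y \<cdot> k' = k \<cdot> e"
      by (rule cover[OF rey ka])
    have e': "Cod C k' = Z" using e by simp
    have ew: "w \<cdot> (h \<cdot> e) = v \<cdot> (y \<cdot> k')"
    proof -
      have "w \<cdot> (h \<cdot> e) = (w \<cdot> h) \<cdot> e" using hA hk(1-3) e by simp
      also have "\<dots> = (v \<cdot> k) \<cdot> e" using hk(4) by simp
      also have "\<dots> = v \<cdot> (k \<cdot> e)" using kA hk(1-3) e by simp
      also have "\<dots> = v \<cdot> (y \<cdot> k')" using e(7) by simp
      finally show ?thesis .
    qed
    obtain p0 where p0: "arr p0" "Dom C p0 = Dom C (h \<cdot> e)" "Cod C p0 = P" "u \<cdot> (x \<cdot> p0) = h \<cdot> e" "\<phi> \<cdot> p0 = k'"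
      by (rule opair[of "h \<cdot> e" k']) (use hA kA hk e e' ew in simp_all)
    have p0': "Dom C p0 = Dom C e" using p0 hA hk e by simp
    have xp: "arr (x \<cdot> p0)" "Dom C (x \<cdot> p0) = Dom C e" "Cod C (x \<cdot> p0) = X" using p0 p0' by simp_all
    have fx: "f \<cdot> (x \<cdot> p0) = k \<cdot> e" using p0 e(7) by simp
    have "\<exists>t. arr t \<and> Dom C t = Cod C e \<and> Cod C t = Cod C (x \<cdot> p0) \<and> t \<cdot> e = x \<cdot> p0"
    proof (rule descend[OF e(1) xp(1)])
      show "Dom C (x \<cdot> p0) = Dom C e" by (rule xp(2))
    next
      fix a b assume A: "arr a" "arr b" "Cod C a = Dom C e" "Cod C b = Dom C e" "Dom C a = Dom C b" "e \<cdot> a = e \<cdot> b"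
      have "x \<cdot> (p0 \<cdot> a) = x \<cdot> (p0 \<cdot> b)"
      proof (rule jmPS)
        have "f \<cdot> (x \<cdot> (p0 \<cdot> a)) = (f \<cdot> (x \<cdot> p0)) \<cdot> a" using p0(1,3) p0' A(1-5) e(2) by simp
        also have "\<dots> = (k \<cdot> e) \<cdot> a" using fx by simp
        also have "\<dots> = k \<cdot> (e \<cdot> a)" using kA hk e A by simp
        also have "\<dots> = k \<cdot> (e \<cdot> b)" using A(6) by simp
        also have "\<dots> = (k \<cdot> e) \<cdot> b" using kA hk e A by simp
        also have "\<dots> = (f \<cdot> (x \<cdot> p0)) \<cdot> b" using fx by simp
        also have "\<dots> = f \<cdot> (x \<cdot> (p0 \<cdot> b))" using p0(1,3) p0' A(1-5) e(2) by simp
        finally show "f \<cdot> (x \<cdot> (p0 \<cdot> a)) = f \<cdot> (x \<cdot> (p0 \<cdot> b))" .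
        have "u \<cdot> (x \<cdot> (p0 \<cdot> a)) = (u \<cdot> (x \<cdot> p0)) \<cdot> a" using p0(1,3) p0' A(1-5) e(2) by simp
        also have "\<dots> = (h \<cdot> e) \<cdot> a" using p0(4) by simp
        also have "\<dots> = h \<cdot> (e \<cdot> a)" using hA hk e A by simp
        also have "\<dots> = h \<cdot> (e \<cdot> b)" using A(6) by simp
        also have "\<dots> = (h \<cdot> e) \<cdot> b" using hA hk e A by simp
        also have "\<dots> = (u \<cdot> (x \<cdot> p0)) \<cdot> b" using p0(4) by simp
        also have "\<dots> = u \<cdot> (x \<cdot> (p0 \<cdot> b))" using p0(1,3) p0' A(1-5) e(2) by simp
        finally show "u \<cdot> (x \<cdot> (p0 \<cdot> a)) = u \<cdot> (x \<cdot> (p0 \<cdot> b))" .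
      qed (use p0 p0' A in simp_all)
      thus "(x \<cdot> p0) \<cdot> a = (x \<cdot> p0) \<cdot> b" using p0(1,3) p0' A(1-5) e(2) by simp
    next
      fix t assume "arr t" "Dom C t = Cod C e" "Cod C t = Cod C (x \<cdot> p0)" "t \<cdot> e = x \<cdot> p0"
      thus "\<exists>t. arr t \<and> Dom C t = Cod C e \<and> Cod C t = Cod C (x \<cdot> p0) \<and> t \<cdot> e = x \<cdot> p0" by blast
    qed
    then obtain t where t: "arr t" "Dom C t = Cod C e" "Cod C t = Cod C (x \<cdot> p0)" "t \<cdot> e = x \<cdot> p0" by blast
    have t': "Dom C t = Dom C h" "Cod C t = X" using t e hk xp by simp_all
    have ut: "u \<cdot> t = h"
    proof (rule epi[OF e(1)])
      have "(u \<cdot> t) \<cdot> e = u \<cdot> (t \<cdot> e)" using t t' e hk by simp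
      also have "\<dots> = h \<cdot> e" using t(4) p0(4) by simp
      finally show "(u \<cdot> t) \<cdot> e = h \<cdot> e" .
    qed (use t t' e hA hk in simp_all)
    have ft: "f \<cdot> t = k"
    proof (rule epi[OF e(1)])
      have "(f \<cdot> t) \<cdot> e = f \<cdot> (t \<cdot> e)" using t t' e hk by simp
      also have "\<dots> = k \<cdot> e" using t(4) fx by simp
      finally show "(f \<cdot> t) \<cdot> e = k \<cdot> e" .
    qed (use t t' e kA hk in simp_all)
    show "\<exists>!t. t \<in> hom C (Dom C h) (Dom C u) \<and> u \<cdot> t = h \<and> f \<cdot> t = k"
    proof (rule ex1I[of _ t])
      show "t \<in> hom C (Dom C h) (Dom C u) \<and> u \<cdot> t = h \<and> f \<cdot> t = k" using t t' ut ft unfolding hom_def by simp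
    next
      fix t2 assume t2: "t2 \<in> hom C (Dom C h) (Dom C u) \<and> u \<cdot> t2 = h \<and> f \<cdot> t2 = k"
      show "t2 = t" by (rule jmPS) (use t2 t t' ut ft in \<open>simp_all add: hom_def\<close>)
    qed
  qed
  show "is_pullback C w v u f" unfolding is_pullback_def by (intro conjI U2) (simp_all add: sq2)
qed

end


theorem proposition4p2:
  fixes C :: "'a cat"
  assumes "almost_exact C" and "gumm C"
    and "\<phi> \<in> hom C P Z" and "x \<in> hom C P X" and "f \<in> hom C X Y" and "y \<in> hom C Z Y"
    and "u \<in> hom C X U" and "v \<in> hom C Y V" and "w \<in> hom C U V"
    and "Cmp C f x = Cmp C y \<phi>" and "Cmp C w u = Cmp C v f"
    and "regular_epi C \<phi>" and "regular_epi C x" and "regular_epi C f" and "regular_epi C y"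
    and "is_pushout C x \<phi> f y"
    and "is_pullback C w (Cmp C v y) (Cmp C u x) \<phi>"
  shows "is_pullback C f y x \<phi> \<and> is_pullback C w v u f"
proof -
  have reg: "regular C" using assms(1) unfolding almost_exact_def by (elim conjE)
  have fc: "finitely_complete C" using reg unfolding regular_def by (elim conjE)
  have cat: "category C" using fc unfolding finitely_complete_def by (elim conjE)
  interpret PS C \<phi> x f y u v w P Z X Y U V
    by (unfold_locales) (fact cat reg assms)+
  show ?thesis by (rule final)
qed

end
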